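(* Consider an $SU(2)$ monopole $(\nabla,\Phi)$ on $E\to\mathbb R^3$ and fix $O\in\mathbb R^3$. For an oriented line $\gamma$ that is not a spectral line, let $x$ be the point of $\gamma$ closest to $O$, and let $L^\pm_\gamma\subset E_x$ be the (one-dimensional) subspaces of initial values at $x$ of solutions of $(\nabla_{\dot\gamma}-i\Phi)s=0$ along $\gamma$ decaying at the positive, respectively negative, end of $\gamma$, so $E_x=L^+_\gamma\oplus L^-_\gamma$. Define $M_\gamma:E_x\to E_x$ to be $+1$ on $L^+_\gamma$ and $-1$ on $L^-_\gamma$. Then there are constants $R,C>0$ such that $\|M_\gamma\|\le C$ for all non-spectral lines $\gamma$ with $\|x-O\|\ge R$.
   Context: An $SU(2)$ monopole of charge $k$ on $\mathbb R^3$: $SU(2)$ connection $\nabla$ and Higgs field $\Phi$ on rank-2 $SU(2)$ bundle $E$ with $F_\nabla=*\nabla\Phi$ and Hitchin's boundary conditions $\|\Phi\|=1-k/2r+O(r^{-2})$, $\|\nabla\Phi\|=O(r^{-2})$; in particular there is a unitary gauge diagonalising $\Phi$ in which the connection matrix is $\begin{pmatrix}A&B\\-B^*&-A\end{pmatrix}$ with $B=O(r^{-2})$ ($r$ = distance from $O$). A spectral line is an oriented line along which a nonzero solution of $(\nabla_{\dot\gamma}-i\Phi)s=0$ decays at both ends. Norms are the Hermitian norms on $E_x$. *)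

theory Defs
  imports "HOL-Analysis.Analysis"
begin

text \<open>Since every bundle over R^3 is trivial, the rank-2 SU(2) bundle E is
  R^3 x C^2 with the standard Hermitian structure. A connection is
  nabla_j = d_j + A_j with A_j(x) skew-Hermitian traceless 2x2 matrices (j = 1,2,3),
  and the Higgs field Phi(x) is skew-Hermitian traceless.\<close>

type_synonym pt = "real^3"
type_synonym fib = "complex^2"
type_synonym mat = "complex^2^2"

definition madj :: "mat \<Rightarrow> mat" where
  "madj M = (\<chi> a b. cnj (M $ b $ a))"

definition su2 :: "mat \<Rightarrow> bool" where
  "su2 M \<longleftrightarrow> madj M = - M \<and> M $ 1 $ 1 + M $ 2 $ 2 = 0"

definition cvscale :: "complex \<Rightarrow> fib \<Rightarrow> fib" where
  "cvscale c v = (\<chi> a. c * v $ a)"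

definition mcomm :: "mat \<Rightarrow> mat \<Rightarrow> mat" where
  "mcomm M N = M ** N - N ** M"

definition mnorm :: "mat \<Rightarrow> real" where
  "mnorm M = onorm (\<lambda>v::fib. M *v v)"

definition pd :: "3 \<Rightarrow> (pt \<Rightarrow> 'b::real_normed_vector) \<Rightarrow> pt \<Rightarrow> 'b" where
  "pd j f x = frechet_derivative f (at x) (axis j 1)"

fun iter_pd :: "3 list \<Rightarrow> (pt \<Rightarrow> 'b::real_normed_vector) \<Rightarrow> pt \<Rightarrow> 'b" where
  "iter_pd [] f = f"
| "iter_pd (j # js) f = pd j (iter_pd js f)"

definition smooth :: "(pt \<Rightarrow> 'b::real_normed_vector) \<Rightarrow> bool" where
  "smooth f \<longleftrightarrow> (\<forall>js x. iter_pd js f differentiable (at x))"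

definition covPhi :: "(pt \<Rightarrow> 3 \<Rightarrow> mat) \<Rightarrow> (pt \<Rightarrow> mat) \<Rightarrow> 3 \<Rightarrow> pt \<Rightarrow> mat" where
  "covPhi A Phi j x = pd j Phi x + mcomm (A x j) (Phi x)"

definition curv :: "(pt \<Rightarrow> 3 \<Rightarrow> mat) \<Rightarrow> 3 \<Rightarrow> 3 \<Rightarrow> pt \<Rightarrow> mat" where
  "curv A j k x = pd j (\<lambda>y. A y k) x - pd k (\<lambda>y. A y j) x + mcomm (A x j) (A x k)"

text \<open>SU(2) monopole of charge k on R^3 with Hitchin's boundary conditions:
  Bogomolny equation F = * nabla Phi, ||Phi|| = 1 - k/2r + O(r^-2), ||nabla Phi|| = O(r^-2).\<close>
definition monopole :: "nat \<Rightarrow> (pt \<Rightarrow> 3 \<Rightarrow> mat) \<Rightarrow> (pt \<Rightarrow> mat) \<Rightarrow> bool" where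
  "monopole k A Phi \<longleftrightarrow>
     (\<forall>j. smooth (\<lambda>x. A x j)) \<and> smooth Phi \<and>
     (\<forall>x j. su2 (A x j)) \<and> (\<forall>x. su2 (Phi x)) \<and>
     (\<forall>x. curv A 1 2 x = covPhi A Phi 3 x \<and>
          curv A 2 3 x = covPhi A Phi 1 x \<and>
          curv A 3 1 x = covPhi A Phi 2 x) \<and>
     (\<exists>C R. R > 0 \<and> (\<forall>x. norm x \<ge> R \<longrightarrow>
          \<bar>mnorm (Phi x) - (1 - real k / (2 * norm x))\<bar> \<le> C / (norm x)\<^sup>2)) \<and>
     (\<exists>C R. R > 0 \<and> (\<forall>x. norm x \<ge> R \<longrightarrow>
          (\<Sum>j\<in>UNIV. mnorm (covPhi A Phi j x)) \<le> C / (norm x)\<^sup>2))"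

text \<open>Oriented line through x with unit direction u, parametrised as t |-> x + t u.
  A section s along it solves (nabla_{gamma'} - i Phi) s = 0, i.e.
  s'(t) + A_u(gamma t) s(t) - i Phi(gamma t) s(t) = 0, where A_u = sum_j u_j A_j.\<close>
definition line_sol :: "(pt \<Rightarrow> 3 \<Rightarrow> mat) \<Rightarrow> (pt \<Rightarrow> mat) \<Rightarrow> pt \<Rightarrow> pt \<Rightarrow> (real \<Rightarrow> fib) \<Rightarrow> bool" where
  "line_sol A Phi x u s \<longleftrightarrow>
     (\<forall>t. (s has_vector_derivative
           (cvscale \<i> (Phi (x + t *\<^sub>R u) *v s t)
            - (\<Sum>j\<in>UNIV. cvscale (complex_of_real (u $ j)) (A (x + t *\<^sub>R u) j *v s t))))
         (at t))"

definition spectral_line :: "(pt \<Rightarrow> 3 \<Rightarrow> mat) \<Rightarrow> (pt \<Rightarrow> mat) \<Rightarrow> pt \<Rightarrow> pt \<Rightarrow> bool" where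
  "spectral_line A Phi x u \<longleftrightarrow>
     (\<exists>s. line_sol A Phi x u s \<and> (\<exists>t. s t \<noteq> 0) \<and>
          (s \<longlongrightarrow> 0) at_top \<and> (s \<longlongrightarrow> 0) at_bot)"

definition Lplus :: "(pt \<Rightarrow> 3 \<Rightarrow> mat) \<Rightarrow> (pt \<Rightarrow> mat) \<Rightarrow> pt \<Rightarrow> pt \<Rightarrow> fib set" where
  "Lplus A Phi x u = {s 0 | s. line_sol A Phi x u s \<and> (s \<longlongrightarrow> 0) at_top}"

definition Lminus :: "(pt \<Rightarrow> 3 \<Rightarrow> mat) \<Rightarrow> (pt \<Rightarrow> mat) \<Rightarrow> pt \<Rightarrow> pt \<Rightarrow> fib set" where
  "Lminus A Phi x u = {s 0 | s. line_sol A Phi x u s \<and> (s \<longlongrightarrow> 0) at_bot}"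

definition Mgamma :: "(pt \<Rightarrow> 3 \<Rightarrow> mat) \<Rightarrow> (pt \<Rightarrow> mat) \<Rightarrow> pt \<Rightarrow> pt \<Rightarrow> fib \<Rightarrow> fib" where
  "Mgamma A Phi x u v =
     (THE w. \<exists>a\<in>Lplus A Phi x u. \<exists>b\<in>Lminus A Phi x u. v = a + b \<and> w = a - b)"

definition closest_pt :: "pt \<Rightarrow> pt \<Rightarrow> pt \<Rightarrow> pt" where
  "closest_pt o0 p u = p + ((o0 - p) \<bullet> u) *\<^sub>R u"

end

theory Submission
  imports Defs "HOL-Real_Asymp.Real_Asymp"
begin

lemma entry_le_norm: "norm ((A::mat) $ i $ j) \<le> norm A"
  by (rule order_trans[OF Finite_Cartesian_Product.norm_nth_le Finite_Cartesian_Product.norm_nth_le])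

lemma norm_vec_le_l1: "norm (x::'a::real_normed_vector^'n) \<le> (\<Sum>i\<in>UNIV. norm (x $ i))"
  by (simp add: norm_vec_def L2_set_le_sum)

lemma norm_matmul_le: "norm ((A::mat) ** (B::mat)) \<le> 8 * norm A * norm B"
proof -
  have e: "norm ((A ** B) $ i $ j) \<le> 2 * norm A * norm B" for i j
  proof -
    have "norm ((A ** B) $ i $ j) = norm (\<Sum>k\<in>UNIV. A $ i $ k * B $ k $ j)"
      by (simp add: matrix_matrix_mult_def)
    also have "\<dots> \<le> (\<Sum>k\<in>UNIV. norm (A $ i $ k) * norm (B $ k $ j))"
      by (rule order_trans[OF norm_sum]) (simp add: norm_mult)
    also have "\<dots> \<le> (\<Sum>k\<in>(UNIV::2 set). norm A * norm B)"
      by (intro sum_mono mult_mono entry_le_norm) (auto intro: order_trans[OF Finite_Cartesian_Product.norm_nth_le Finite_Cartesian_Product.norm_nth_le])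
    finally show ?thesis by (simp add: sum_2)
  qed
  have "norm (A ** B) \<le> (\<Sum>i\<in>UNIV. norm ((A ** B) $ i))" by (rule norm_vec_le_l1)
  also have "\<dots> \<le> (\<Sum>i\<in>(UNIV::2 set). \<Sum>j\<in>(UNIV::2 set). norm ((A ** B) $ i $ j))"
    by (intro sum_mono norm_vec_le_l1)
  also have "\<dots> \<le> (\<Sum>i\<in>(UNIV::2 set). \<Sum>j\<in>(UNIV::2 set). 2 * norm A * norm B)"
    by (intro sum_mono e)
  finally show ?thesis by (simp add: sum_2)
qed

lemma norm_matvec_le: "norm ((A::mat) *v v) \<le> 4 * norm A * norm v"
proof -
  have e: "norm ((A *v v) $ i) \<le> 2 * norm A * norm v" for i
  proof -
    have "norm ((A *v v) $ i) = norm (\<Sum>k\<in>UNIV. A $ i $ k * v $ k)"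
      by (simp add: matrix_vector_mult_def)
    also have "\<dots> \<le> (\<Sum>k\<in>UNIV. norm (A $ i $ k) * norm (v $ k))"
      by (rule order_trans[OF norm_sum]) (simp add: norm_mult)
    also have "\<dots> \<le> (\<Sum>k\<in>(UNIV::2 set). norm A * norm v)"
      by (intro sum_mono mult_mono entry_le_norm) (auto intro: Finite_Cartesian_Product.norm_nth_le)
    finally show ?thesis by (simp add: sum_2)
  qed
  have "norm (A *v v) \<le> (\<Sum>i\<in>UNIV. norm ((A *v v) $ i))" by (rule norm_vec_le_l1)
  also have "\<dots> \<le> (\<Sum>i\<in>(UNIV::2 set). 2 * norm A * norm v)"
    by (intro sum_mono e)
  finally show ?thesis by (simp add: sum_2)
qed

lemma bounded_bilinear_matmul: "bounded_bilinear (\<lambda>(A::mat) (B::mat). A ** B)"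
proof
  fix a a' b b' :: mat and r :: real
  show "(a + a') ** b = a ** b + a' ** b"
    unfolding vec_eq_iff matrix_matrix_mult_def by (simp add: distrib_right sum.distrib)
  show "b ** (a + a') = b ** a + b ** a'" by (simp add: matrix_add_ldistrib)
  show "(r *\<^sub>R a) ** b = r *\<^sub>R (a ** b)"
    by (simp add: matrix_matrix_mult_def vec_eq_iff scaleR_sum_right)
  show "a ** (r *\<^sub>R b) = r *\<^sub>R (a ** b)"
    by (simp add: matrix_matrix_mult_def vec_eq_iff scaleR_sum_right)
  show "\<exists>K. \<forall>(a::mat) (b::mat). norm (a ** b) \<le> norm a * norm b * K"
    using norm_matmul_le by (intro exI[of _ 8]) (simp add: mult_ac)
qed

lemma bounded_bilinear_matvec: "bounded_bilinear (\<lambda>(A::mat) (v::fib). A *v v)"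
proof
  fix a a' :: mat and b b' :: fib and r :: real
  show "(a + a') *v b = a *v b + a' *v b" by (simp add: matrix_vector_mult_add_rdistrib)
  show "a *v (b + b') = a *v b + a *v b'" by (simp add: matrix_vector_right_distrib)
  show "(r *\<^sub>R a) *v b = r *\<^sub>R (a *v b)"
    by (simp add: matrix_vector_mult_def vec_eq_iff scaleR_sum_right)
  show "a *v (r *\<^sub>R b) = r *\<^sub>R (a *v b)"
    by (simp add: matrix_vector_mult_def vec_eq_iff scaleR_sum_right)
  show "\<exists>K. \<forall>(a::mat) (b::fib). norm (a *v b) \<le> norm a * norm b * K"
    using norm_matvec_le by (intro exI[of _ 4]) (simp add: mult_ac)
qed

definition JI :: "(real \<Rightarrow> mat) \<Rightarrow> real \<Rightarrow> mat" where
  "JI f t = (if 0 \<le> t then integral {0..t} f else - integral {t..0} f)"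

lemma JI_eq:
  assumes f: "continuous_on UNIV f" and a: "a \<le> 0" "a \<le> t"
  shows "JI f t = integral {a..t} f - integral {a..0} f"
proof (cases "0 \<le> t")
  case True
  have "integral {a..0} f + integral {0..t} f = integral {a..t} f"
    by (rule Henstock_Kurzweil_Integration.integral_combine) (use a True in \<open>auto intro: integrable_continuous_real continuous_on_subset[OF f]\<close>)
  then show ?thesis using True by (simp add: JI_def algebra_simps)
next
  case False
  have "integral {a..t} f + integral {t..0} f = integral {a..0} f"
    by (rule Henstock_Kurzweil_Integration.integral_combine) (use a False in \<open>auto intro: integrable_continuous_real continuous_on_subset[OF f]\<close>)
  then show ?thesis using False by (simp add: JI_def algebra_simps)
qed

lemma JI_deriv:
  assumes f: "continuous_on UNIV f"
  shows "(JI f has_vector_derivative f t) (at t)"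
proof -
  define a where "a = - \<bar>t\<bar> - 1"
  define b where "b = \<bar>t\<bar> + 1"
  have "((\<lambda>u. integral {a..u} f) has_vector_derivative f t) (at t within {a..b})"
    by (rule integral_has_vector_derivative) (auto simp: a_def b_def intro: continuous_on_subset[OF f])
  then have "((\<lambda>u. integral {a..u} f) has_vector_derivative f t) (at t)"
    using at_within_Icc_at[of a t b] by (simp add: a_def b_def)
  then have "((\<lambda>u. integral {a..u} f - integral {a..0} f) has_vector_derivative f t) (at t)"
    by (rule derivative_eq_intros) auto
  then show ?thesis
    by (rule has_vector_derivative_transform_within_open[where S="{a<..}"])
       (auto simp: a_def intro!: JI_eq[OF f, symmetric])
qed

lemma JI_0 [simp]: "JI f 0 = 0"
  by (simp add: JI_def)

lemma JI_cont: "continuous_on UNIV f \<Longrightarrow> continuous_on UNIV (JI f)"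
  by (meson JI_deriv continuous_at_imp_continuous_on has_vector_derivative_continuous)

fun pic :: "(real \<Rightarrow> mat) \<Rightarrow> nat \<Rightarrow> real \<Rightarrow> mat" where
  "pic M 0 t = mat 1"
| "pic M (Suc n) t = JI (\<lambda>\<tau>. M \<tau> ** pic M n \<tau>) t"

lemma cont_matmul: "continuous_on S f \<Longrightarrow> continuous_on S g \<Longrightarrow> continuous_on S (\<lambda>x. (f x :: mat) ** (g x :: mat))"
  using bounded_bilinear.continuous_on[OF bounded_bilinear_matmul] by blast

lemma pic_cont: "continuous_on UNIV M \<Longrightarrow> continuous_on UNIV (pic M n)"
  by (induction n) (auto intro!: JI_cont cont_matmul)

lemma pic_deriv: "continuous_on UNIV M \<Longrightarrow> (pic M (Suc n) has_vector_derivative (M t ** pic M n t)) (at t)"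
  unfolding pic.simps by (intro JI_deriv cont_matmul pic_cont) auto

lemma pic_0: "pic M (Suc n) 0 = 0" by simp

lemma norm_mat1: "norm (mat 1 :: mat) \<le> 2"
  by (rule order_trans[OF norm_vec_le_l1]) (simp add: sum_2 mat_def norm_vec_def L2_set_def vec_eq_iff)

lemma poly_integral_pos:
  fixes L t :: real assumes "0 \<le> t"
  shows "((\<lambda>\<tau>. 2 * L * (L * \<tau>) ^ n / fact n) has_integral (2 * (L * t) ^ Suc n / fact (Suc n))) {0..t}"
proof -
  have "((\<lambda>\<tau>. 2 * L * (L * \<tau>) ^ n / fact n) has_integral
        ((\<lambda>\<tau>. 2 * (L * \<tau>) ^ Suc n / fact (Suc n)) t - (\<lambda>\<tau>. 2 * (L * \<tau>) ^ Suc n / fact (Suc n)) 0)) {0..t}"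
  proof (rule fundamental_theorem_of_calculus[OF assms])
    fix x assume "x \<in> {0..t}"
    have d1: "((\<lambda>\<tau>. L * \<tau>) has_real_derivative L) (at x)" by (auto intro!: derivative_eq_intros)
    have "((\<lambda>\<tau>. 2 / fact (Suc n) * (L * \<tau>) ^ Suc n) has_real_derivative 2 / fact (Suc n) * (real (Suc n) * L * (L * x) ^ n)) (at x)"
      using DERIV_cmult[OF DERIV_power[OF d1, of "Suc n"], of "2 / fact (Suc n)"] by simp
    moreover have "2 / fact (Suc n) * (real (Suc n) * L * (L * x) ^ n) = 2 * L * (L * x) ^ n / fact n"
      by (simp add: fact_Suc field_simps del: of_nat_Suc)
    moreover have "(\<lambda>\<tau>. 2 / fact (Suc n) * (L * \<tau>) ^ Suc n) = (\<lambda>\<tau>. 2 * (L * \<tau>) ^ Suc n / fact (Suc n))"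
      by auto
    ultimately show "((\<lambda>\<tau>. 2 * (L * \<tau>) ^ Suc n / fact (Suc n)) has_vector_derivative 2 * L * (L * x) ^ n / fact n) (at x within {0..t})"
      by (metis has_real_derivative_iff_has_vector_derivative has_vector_derivative_at_within)
  qed
  then show ?thesis by simp
qed

lemma poly_integral_neg:
  fixes L t :: real assumes "t \<le> 0"
  shows "((\<lambda>\<tau>. 2 * L * (L * - \<tau>) ^ n / fact n) has_integral (2 * (L * - t) ^ Suc n / fact (Suc n))) {t..0}"
proof -
  have "((\<lambda>\<tau>. 2 * L * (L * - \<tau>) ^ n / fact n) has_integral
        ((\<lambda>\<tau>. - 2 * (L * - \<tau>) ^ Suc n / fact (Suc n)) 0 - (\<lambda>\<tau>. - 2 * (L * - \<tau>) ^ Suc n / fact (Suc n)) t)) {t..0}"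
  proof (rule fundamental_theorem_of_calculus[OF assms])
    fix x assume "x \<in> {t..0}"
    have d1: "((\<lambda>\<tau>. L * - \<tau>) has_real_derivative - L) (at x)" by (auto intro!: derivative_eq_intros)
    have "((\<lambda>\<tau>. - 2 / fact (Suc n) * (L * - \<tau>) ^ Suc n) has_real_derivative - 2 / fact (Suc n) * (real (Suc n) * - L * (L * - x) ^ n)) (at x)"
      using DERIV_cmult[OF DERIV_power[OF d1, of "Suc n"], of "- 2 / fact (Suc n)"] by simp
    moreover have "- 2 / fact (Suc n) * (real (Suc n) * - L * (L * - x) ^ n) = 2 * L * (L * - x) ^ n / fact n"
      by (simp add: fact_Suc field_simps del: of_nat_Suc)
    moreover have "(\<lambda>\<tau>. - 2 / fact (Suc n) * (L * - \<tau>) ^ Suc n) = (\<lambda>\<tau>. - 2 * (L * - \<tau>) ^ Suc n / fact (Suc n))"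
      by auto
    ultimately show "((\<lambda>\<tau>. - 2 * (L * - \<tau>) ^ Suc n / fact (Suc n)) has_vector_derivative 2 * L * (L * - x) ^ n / fact n) (at x within {t..0})"
      by (metis has_real_derivative_iff_has_vector_derivative has_vector_derivative_at_within)
  qed
  then show ?thesis by simp
qed

lemma pic_bound:
  assumes M: "continuous_on UNIV M" and K: "\<And>\<tau>. \<bar>\<tau>\<bar> \<le> T \<Longrightarrow> norm (M \<tau>) \<le> K" and K0: "0 \<le> K"
  shows "\<bar>t\<bar> \<le> T \<Longrightarrow> norm (pic M n t) \<le> 2 * (8 * K * \<bar>t\<bar>) ^ n / fact n"
proof (induction n arbitrary: t)
  case 0
  then show ?case using norm_mat1 by simp
next
  case (Suc n)
  define L where "L = 8 * K"
  have L0: "0 \<le> L" using K0 by (simp add: L_def)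
  have cf: "continuous_on UNIV (\<lambda>\<tau>. M \<tau> ** pic M n \<tau>)"
    by (intro cont_matmul pic_cont M) 
  have gb: "norm (M \<tau> ** pic M n \<tau>) \<le> 2 * L * (L * \<bar>\<tau>\<bar>) ^ n / fact n" if "\<bar>\<tau>\<bar> \<le> T" for \<tau>
  proof -
    have "norm (M \<tau> ** pic M n \<tau>) \<le> 8 * norm (M \<tau>) * norm (pic M n \<tau>)" by (rule norm_matmul_le)
    also have "\<dots> \<le> 8 * K * (2 * (L * \<bar>\<tau>\<bar>) ^ n / fact n)"
      using Suc.IH[OF that] K[OF that] K0 unfolding L_def
      by (intro mult_mono) auto
    finally show ?thesis by (simp add: L_def)
  qed
  have gbp: "norm (M \<tau> ** pic M n \<tau>) \<le> 2 * L * (L * \<tau>) ^ n / fact n" if "0 \<le> \<tau>" "\<tau> \<le> t" for \<tau>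
    using gb[of \<tau>] that Suc.prems by auto
  have gbn: "norm (M \<tau> ** pic M n \<tau>) \<le> 2 * L * (L * - \<tau>) ^ n / fact n" if "t \<le> \<tau>" "\<tau> \<le> 0" for \<tau>
    using gb[of \<tau>] that Suc.prems by auto
  show ?case
  proof (cases "0 \<le> t")
    case True
    have "norm (pic M (Suc n) t) = norm (integral {0..t} (\<lambda>\<tau>. M \<tau> ** pic M n \<tau>))"
      using True by (simp add: JI_def)
    also have "\<dots> \<le> integral {0..t} (\<lambda>\<tau>. 2 * L * (L * \<tau>) ^ n / fact n)"
      by (rule integral_norm_bound_integral)
         (use True gbp poly_integral_pos[OF True, of L n] in \<open>auto intro: integrable_continuous_real continuous_on_subset[OF cf]\<close>)
    also have "\<dots> = 2 * (L * t) ^ Suc n / fact (Suc n)"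
      by (rule integral_unique[OF poly_integral_pos[OF True]])
    finally show ?thesis using True by (simp add: L_def)
  next
    case False
    then have t0: "t \<le> 0" by simp
    have "norm (pic M (Suc n) t) = norm (integral {t..0} (\<lambda>\<tau>. M \<tau> ** pic M n \<tau>))"
      using False by (simp add: JI_def)
    also have "\<dots> \<le> integral {t..0} (\<lambda>\<tau>. 2 * L * (L * - \<tau>) ^ n / fact n)"
      by (rule integral_norm_bound_integral)
         (use t0 gbn poly_integral_neg[OF t0, of L n] in \<open>auto intro: integrable_continuous_real continuous_on_subset[OF cf]\<close>)
    also have "\<dots> = 2 * (L * - t) ^ Suc n / fact (Suc n)"
      by (rule integral_unique[OF poly_integral_neg[OF t0]])
    finally show ?thesis using t0 by (simp add: L_def)
  qed
qed

lemma matmul_diff_right: "(A::mat) ** ((B::mat) - C) = A ** B - A ** C"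
  using bounded_bilinear.diff_right[OF bounded_bilinear_matmul] by simp

definition fundU :: "(real \<Rightarrow> mat) \<Rightarrow> real \<Rightarrow> mat" where
  "fundU M t = (\<Sum>n. pic M n t)"

lemma fundU_0: "fundU M 0 = mat 1"
proof -
  have "(\<lambda>n. pic M n 0) = (\<lambda>n. if n = 0 then mat 1 else 0)"
    by (rule ext) (case_tac n, auto)
  then have "(\<lambda>n. pic M n 0) sums mat 1"
    using sums_single[of 0 "\<lambda>_. mat 1 :: mat"] by simp
  then show ?thesis unfolding fundU_def by (rule sums_unique[symmetric])
qed

lemma fundU_deriv:
  assumes M: "continuous_on UNIV M"
  shows "(fundU M has_vector_derivative (M t0 ** fundU M t0)) (at t0)"
proof -
  define T where "T = \<bar>t0\<bar> + 1"
  define S where "S = {-T<..<T}"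
  have "compact (M ` {-T..T})" by (intro compact_continuous_image continuous_on_subset[OF M]) auto
  then obtain K where K0: "K > 0" and Kb: "\<And>x. x \<in> M ` {-T..T} \<Longrightarrow> norm x \<le> K"
    using compact_imp_bounded bounded_pos by metis
  have K: "norm (M \<tau>) \<le> K" if "\<bar>\<tau>\<bar> \<le> T" for \<tau> using Kb[of "M \<tau>"] that by (auto simp: abs_le_iff)
  define L where "L = 8 * K"
  define c where "c n = 2 * (L * T) ^ n / fact n" for n
  have T0: "0 < T" by (simp add: T_def)
  have bnd: "norm (pic M n x) \<le> c n" if "x \<in> S" for n x
  proof -
    have ax: "\<bar>x\<bar> \<le> T" using that by (auto simp: S_def)
    have "norm (pic M n x) \<le> 2 * (8 * K * \<bar>x\<bar>) ^ n / fact n"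
      by (rule pic_bound[OF M K _ ax]) (use K0 in auto)
    also have "\<dots> \<le> c n" unfolding c_def L_def
      using ax K0 by (intro divide_right_mono mult_left_mono power_mono) auto
    finally show ?thesis .
  qed
  have sc: "summable c"
    using summable_mult[OF summable_exp[of "L * T"], of 2] unfolding c_def
    by (simp add: field_simps)
  have ul: "uniform_limit S (\<lambda>n x. \<Sum>i<n. pic M i x) (fundU M) sequentially"
    unfolding fundU_def by (rule Weierstrass_m_test[where M=c, OF bnd sc])
  define f' where "f' n x h = (case n of 0 \<Rightarrow> 0 | Suc m \<Rightarrow> h *\<^sub>R (M x ** pic M m x))" for n x and h :: real
  have der: "((pic M n) has_derivative (f' n x)) (at x within S)" for n x
  proof (cases n)
    case 0
    have "pic M 0 = (\<lambda>_. mat 1)" by (rule ext) simp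
    moreover have "f' 0 x = (\<lambda>h. 0)" by (rule ext) (simp add: f'_def)
    ultimately show ?thesis using 0 by simp
  next
    case (Suc m)
    have "f' n x = (\<lambda>h. h *\<^sub>R (M x ** pic M m x))" by (rule ext) (simp add: f'_def Suc)
    then show ?thesis using pic_deriv[OF M, of m x] Suc
      by (simp add: has_vector_derivative_def has_derivative_at_withinI)
  qed
  have sumf': "(\<Sum>i<Suc m. f' i x h) = h *\<^sub>R (M x ** (\<Sum>i<m. pic M i x))" for m x h
  proof (induction m)
    case 0
    then show ?case by (simp add: f'_def)
  next
    case (Suc m)
    have "(\<Sum>i<Suc (Suc m). f' i x h) = (\<Sum>i<Suc m. f' i x h) + f' (Suc m) x h" by simp
    also have "\<dots> = h *\<^sub>R (M x ** (\<Sum>i<m. pic M i x)) + h *\<^sub>R (M x ** pic M m x)"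
      using Suc by (simp add: f'_def)
    also have "\<dots> = h *\<^sub>R (M x ** (\<Sum>i<Suc m. pic M i x))"
      by (simp add: matrix_add_ldistrib scaleR_add_right)
    finally show ?case .
  qed
  have unif: "\<forall>\<^sub>F n in sequentially. \<forall>x\<in>S. \<forall>h. norm ((\<Sum>i<n. f' i x h) - h *\<^sub>R (M x ** fundU M x)) \<le> e * norm h"
    if e: "e > 0" for e
  proof -
    have "\<forall>\<^sub>F m in sequentially. \<forall>x\<in>S. dist (\<Sum>i<m. pic M i x) (fundU M x) < e / (8 * K)"
      using ul e K0 unfolding uniform_limit_iff by simp
    then obtain N where N: "\<And>m. m \<ge> N \<Longrightarrow> \<forall>x\<in>S. dist (\<Sum>i<m. pic M i x) (fundU M x) < e / (8 * K)"
      unfolding eventually_sequentially by blast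
    have "\<forall>\<^sub>F n in sequentially. n \<ge> 1 \<and> (\<forall>x\<in>S. dist (\<Sum>i<n - 1. pic M i x) (fundU M x) < e / (8 * K))"
      unfolding eventually_sequentially by (rule exI[of _ "Suc N"]) (auto intro!: N[rule_format])
    then show ?thesis
    proof (rule eventually_mono)
      fix n assume n: "n \<ge> 1 \<and> (\<forall>x\<in>S. dist (\<Sum>i<n - 1. pic M i x) (fundU M x) < e / (8 * K))"
      then obtain m where nm: "n = Suc m" by (cases n) auto
      show "\<forall>x\<in>S. \<forall>h. norm ((\<Sum>i<n. f' i x h) - h *\<^sub>R (M x ** fundU M x)) \<le> e * norm h"
      proof (intro ballI allI)
        fix x h assume x: "x \<in> S"
        have ax: "\<bar>x\<bar> \<le> T" using x by (auto simp: S_def)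
        have "(\<Sum>i<n. f' i x h) - h *\<^sub>R (M x ** fundU M x) = h *\<^sub>R (M x ** ((\<Sum>i<m. pic M i x) - fundU M x))"
          unfolding nm sumf' by (simp add: matmul_diff_right scaleR_diff_right)
        then have "norm ((\<Sum>i<n. f' i x h) - h *\<^sub>R (M x ** fundU M x)) = \<bar>h\<bar> * norm (M x ** ((\<Sum>i<m. pic M i x) - fundU M x))"
          by simp
        also have "\<dots> \<le> \<bar>h\<bar> * (8 * K * (e / (8 * K)))"
        proof (intro mult_left_mono)
          have "norm (M x ** ((\<Sum>i<m. pic M i x) - fundU M x)) \<le> 8 * norm (M x) * norm ((\<Sum>i<m. pic M i x) - fundU M x)"
            by (rule norm_matmul_le)
          also have "\<dots> \<le> 8 * K * (e / (8 * K))"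
            using n x K[OF ax] nm K0 by (intro mult_mono) (auto simp: dist_norm less_imp_le)
          finally show "norm (M x ** ((\<Sum>i<m. pic M i x) - fundU M x)) \<le> 8 * K * (e / (8 * K))" .
        qed simp
        also have "\<dots> = e * norm h" using K0 by simp
        finally show "norm ((\<Sum>i<n. f' i x h) - h *\<^sub>R (M x ** fundU M x)) \<le> e * norm h" .
      qed
    qed
  qed
  have t0S: "t0 \<in> S" by (auto simp: S_def T_def)
  have sm: "(\<lambda>n. pic M n t0) sums fundU M t0"
    using bnd[OF t0S] sc unfolding fundU_def
    by (intro summable_sums summable_comparison_test[of "\<lambda>n. pic M n t0" c]) auto
  have cS: "convex S" by (simp add: S_def)
  obtain g where g0: "\<forall>x\<in>S. (\<lambda>n. pic M n x) sums g x \<and> (g has_derivative (\<lambda>h. h *\<^sub>R (M x ** fundU M x))) (at x within S)"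
    using has_derivative_series[where f="pic M" and f'=f' and S=S and g'="\<lambda>x h. h *\<^sub>R (M x ** fundU M x)", OF cS der unif t0S sm]
    by blast
  have g: "(\<lambda>n. pic M n x) sums g x \<and> (g has_derivative (\<lambda>h. h *\<^sub>R (M x ** fundU M x))) (at x within S)" if "x \<in> S" for x
    using g0 that by blast
  have gU: "g x = fundU M x" if "x \<in> S" for x
    using g[OF that] unfolding fundU_def by (simp add: sums_iff)
  have "(g has_derivative (\<lambda>h. h *\<^sub>R (M t0 ** fundU M t0))) (at t0)"
    using g[OF t0S] at_within_open[OF t0S] by (simp add: S_def)
  then have "(fundU M has_derivative (\<lambda>h. h *\<^sub>R (M t0 ** fundU M t0))) (at t0)"
    by (rule has_derivative_transform_within_open[where s=S]) (use t0S gU in \<open>auto simp: S_def\<close>)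
  then show ?thesis by (simp add: has_vector_derivative_def)
qed

lemma skew_entries:
  assumes "madj B = - B"
  shows "B $ 2 $ 1 = - cnj (B $ 1 $ 2)" "Re (B $ 1 $ 1) = 0" "Re (B $ 2 $ 2) = 0"
proof -
  have e: "cnj (B $ b $ a) = - B $ a $ b" for a b
    using assms unfolding madj_def vec_eq_iff by auto
  show "B $ 2 $ 1 = - cnj (B $ 1 $ 2)" by (simp add: e[of 1 2])
  show "Re (B $ 1 $ 1) = 0" using arg_cong[OF e[of 1 1], of Re] by simp
  show "Re (B $ 2 $ 2) = 0" using arg_cong[OF e[of 2 2], of Re] by simp
qed

lemma su2_entries:
  assumes "su2 P"
  shows "P $ 2 $ 1 = - cnj (P $ 1 $ 2)" "Re (P $ 1 $ 1) = 0" "P $ 2 $ 2 = - P $ 1 $ 1"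
  using assms skew_entries[of P] unfolding su2_def by (auto simp: add_eq_0_iff)

lemma A1:
  assumes "madj B = - B"
  shows "inner s (B *v s) = 0"
  using skew_entries[OF assms]
  by (simp add: inner_vec_def sum_2 matrix_vector_mult_def inner_complex_def algebra_simps)

definition phi2 :: "mat \<Rightarrow> real" where
  "phi2 P = (Im (P $ 1 $ 1))\<^sup>2 + (Re (P $ 1 $ 2))\<^sup>2 + (Im (P $ 1 $ 2))\<^sup>2"

lemma A2:
  assumes "su2 P"
  shows "inner (P *v s) (P *v s) = phi2 P * inner s s"
  using su2_entries[OF assms]
  by (simp add: phi2_def inner_vec_def sum_2 matrix_vector_mult_def inner_complex_def algebra_simps power2_eq_square)

lemma A2':
  assumes "su2 P"
  shows "inner (cvscale \<i> (P *v s)) (cvscale \<i> (P *v s)) = phi2 P * inner s s"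
  using su2_entries[OF assms]
  by (simp add: cvscale_def phi2_def inner_vec_def sum_2 matrix_vector_mult_def inner_complex_def algebra_simps power2_eq_square)

lemma A3:
  assumes "su2 P"
  shows "inner s (cvscale \<i> (P *v cvscale \<i> (P *v s))) = phi2 P * inner s s"
  using su2_entries[OF assms]
  by (simp add: cvscale_def phi2_def inner_vec_def sum_2 matrix_vector_mult_def inner_complex_def algebra_simps power2_eq_square)

lemma A4:
  assumes "madj B = - B"
  shows "- inner (B *v s) (cvscale \<i> (P *v s)) - inner s (cvscale \<i> (P *v (B *v s))) = inner s (cvscale \<i> (mcomm B P *v s))"
  using skew_entries[OF assms]
  by (simp add: mcomm_def cvscale_def inner_vec_def sum_2 matrix_vector_mult_def matrix_matrix_mult_def inner_complex_def algebra_simps)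

lemma A_hderiv:
  assumes "su2 P" "madj B = - B"
  shows "inner (cvscale \<i> (P *v s) - B *v s) (cvscale \<i> (P *v s))
       + inner s (cvscale \<i> (P *v (cvscale \<i> (P *v s) - B *v s) + Q *v s))
       = 2 * phi2 P * inner s s + inner s (cvscale \<i> ((Q + mcomm B P) *v s))"
  using su2_entries[OF assms(1)] skew_entries[OF assms(2)]
  by (simp add: phi2_def mcomm_def cvscale_def inner_vec_def sum_2 matrix_vector_mult_def matrix_matrix_mult_def inner_complex_def algebra_simps power2_eq_square)

lemma A_nderiv:
  assumes "madj B = - B"
  shows "inner s (cvscale \<i> (P *v s) - B *v s) = inner s (cvscale \<i> (P *v s))"
  using skew_entries[OF assms]
  by (simp add: cvscale_def inner_vec_def sum_2 matrix_vector_mult_def inner_complex_def algebra_simps)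

lemma norm_cvscale_i: "norm (cvscale \<i> v) = norm v"
proof -
  have "inner (cvscale \<i> v) (cvscale \<i> v) = inner v v"
    by (simp add: cvscale_def inner_vec_def sum_2 inner_complex_def algebra_simps)
  then show ?thesis by (simp add: norm_eq_sqrt_inner)
qed

lemma bounded_linear_cvscale: "bounded_linear (cvscale c)"
proof (rule bounded_linear_intro[where K="cmod c"])
  show "cvscale c (x + y) = cvscale c x + cvscale c y" for x y
    by (simp add: cvscale_def vec_eq_iff algebra_simps)
  show "cvscale c (r *\<^sub>R x) = r *\<^sub>R cvscale c x" for r x
    by (simp add: cvscale_def vec_eq_iff scaleR_conv_of_real algebra_simps)
  show "norm (cvscale c x) \<le> norm x * cmod c" for x
  proof -
    have "norm (cvscale c x) = sqrt (\<Sum>i\<in>UNIV. (cmod c * cmod (x $ i))\<^sup>2)"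
      by (simp add: cvscale_def norm_vec_def L2_set_def norm_mult)
    also have "\<dots> = cmod c * norm x"
      by (simp add: norm_vec_def L2_set_def power_mult_distrib sum_distrib_left[symmetric] real_sqrt_mult)
    finally show ?thesis by (simp add: mult.commute)
  qed
qed

lemma bl_matvec: "bounded_linear (\<lambda>v::fib. (Q::mat) *v v)"
  using bounded_bilinear.bounded_linear_right[OF bounded_bilinear_matvec] by simp

lemma norm_matvec_mnorm: "norm ((Q::mat) *v v) \<le> mnorm Q * norm v"
  unfolding mnorm_def using onorm[OF bl_matvec] by simp

lemma A6: "\<bar>inner s (cvscale \<i> (Q *v s))\<bar> \<le> mnorm Q * inner s s"
proof -
  have "\<bar>inner s (cvscale \<i> (Q *v s))\<bar> \<le> norm s * norm (cvscale \<i> (Q *v s))"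
    by (rule Cauchy_Schwarz_ineq2)
  also have "\<dots> \<le> norm s * (mnorm Q * norm s)"
    by (intro mult_left_mono) (auto simp: norm_cvscale_i norm_matvec_mnorm)
  also have "\<dots> = mnorm Q * inner s s" by (simp add: power2_norm_eq_inner[symmetric] power2_eq_square)
  finally show ?thesis .
qed

lemma mnorm_su2:
  assumes "su2 P"
  shows "mnorm P = sqrt (phi2 P)"
proof -
  have nv: "norm (P *v v) = sqrt (phi2 P) * norm v" for v
    using A2[OF assms, of v] by (simp add: norm_eq_sqrt_inner real_sqrt_mult)
  have "mnorm P \<le> sqrt (phi2 P)" unfolding mnorm_def by (rule onorm_le) (simp add: nv)
  moreover have "sqrt (phi2 P) \<le> mnorm P"
  proof -
    have "norm (P *v axis 1 1) / norm (axis 1 1 :: fib) \<le> mnorm P"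
      unfolding mnorm_def by (rule le_onorm[OF bl_matvec])
    then show ?thesis by (simp add: nv)
  qed
  ultimately show ?thesis by simp
qed

lemma cvscale_scaleR: "cvscale c (r *\<^sub>R x) = r *\<^sub>R cvscale c x"
  by (simp add: cvscale_def vec_eq_iff scaleR_conv_of_real algebra_simps)

lemma cvscale_add: "cvscale c (x + y) = cvscale c x + cvscale c y"
  by (simp add: cvscale_def vec_eq_iff algebra_simps)

lemma cvscale_diff: "cvscale c (x - y) = cvscale c x - cvscale c y"
  by (simp add: cvscale_def vec_eq_iff algebra_simps)

definition gooddata :: "(real \<Rightarrow> mat) \<Rightarrow> (real \<Rightarrow> mat) \<Rightarrow> (real \<Rightarrow> mat) \<Rightarrow> bool" where
  "gooddata P B P' \<longleftrightarrow> (\<forall>t. su2 (P t)) \<and> (\<forall>t. madj (B t) = - B t) \<and>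
     (\<forall>t. (P has_vector_derivative P' t) (at t)) \<and>
     (\<forall>t. 3/4 \<le> mnorm (P t) \<and> mnorm (P t) \<le> 5/4) \<and>
     (\<forall>t. mnorm (P' t + mcomm (B t) (P t)) \<le> 1/8) \<and> continuous_on UNIV B"

definition solp :: "(real \<Rightarrow> mat) \<Rightarrow> (real \<Rightarrow> mat) \<Rightarrow> (real \<Rightarrow> fib) \<Rightarrow> bool" where
  "solp P B s \<longleftrightarrow> (\<forall>t. (s has_vector_derivative (cvscale \<i> (P t *v s t) - B t *v s t)) (at t))"

definition hq :: "(real \<Rightarrow> mat) \<Rightarrow> (real \<Rightarrow> fib) \<Rightarrow> real \<Rightarrow> real" where
  "hq P s t = inner (s t) (cvscale \<i> (P t *v s t))"

lemma deriv_n: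
  assumes gd: "gooddata P B P'" and sol: "solp P B s"
  shows "((\<lambda>t. inner (s t) (s t)) has_real_derivative 2 * hq P s t) (at t)"
proof -
  define s' where "s' = cvscale \<i> (P t *v s t) - B t *v s t"
  have sd: "(s has_derivative (\<lambda>h. h *\<^sub>R s')) (at t)"
    using sol unfolding solp_def s'_def has_vector_derivative_def by blast
  have "((\<lambda>t. inner (s t) (s t)) has_derivative (\<lambda>h. inner (s t) (h *\<^sub>R s') + inner (h *\<^sub>R s') (s t))) (at t)"
    by (rule has_derivative_inner[OF sd sd])
  moreover have "(\<lambda>h. inner (s t) (h *\<^sub>R s') + inner (h *\<^sub>R s') (s t)) = (\<lambda>h. (2 * hq P s t) * h)"
  proof
    fix h
    have "inner (s t) s' = hq P s t" unfolding s'_def hq_def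
      by (rule A_nderiv) (use gd in \<open>auto simp: gooddata_def\<close>)
    then show "inner (s t) (h *\<^sub>R s') + inner (h *\<^sub>R s') (s t) = (2 * hq P s t) * h"
      by (simp add: inner_commute)
  qed
  ultimately show ?thesis by (simp add: has_field_derivative_def)
qed

lemma deriv_h:
  assumes gd: "gooddata P B P'" and sol: "solp P B s"
  shows "\<exists>H. (hq P s has_real_derivative H) (at t) \<and> H \<ge> inner (s t) (s t)"
proof -
  define s' where "s' = cvscale \<i> (P t *v s t) - B t *v s t"
  have sd: "(s has_derivative (\<lambda>h. h *\<^sub>R s')) (at t)"
    using sol unfolding solp_def s'_def has_vector_derivative_def by blast
  have Pd: "(P has_derivative (\<lambda>h. h *\<^sub>R P' t)) (at t)"
    using gd unfolding gooddata_def has_vector_derivative_def by blast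
  have su: "su2 (P t)" and sk: "madj (B t) = - B t" using gd by (auto simp: gooddata_def)
  have ud: "((\<lambda>t. P t *v s t) has_derivative (\<lambda>h. P t *v (h *\<^sub>R s') + (h *\<^sub>R P' t) *v s t)) (at t)"
    using bounded_bilinear.FDERIV[OF bounded_bilinear_matvec Pd sd] by simp
  have vd: "((\<lambda>t. cvscale \<i> (P t *v s t)) has_derivative (\<lambda>h. cvscale \<i> (P t *v (h *\<^sub>R s') + (h *\<^sub>R P' t) *v s t))) (at t)"
    by (rule bounded_linear.has_derivative[OF bounded_linear_cvscale ud])
  have hd: "(hq P s has_derivative (\<lambda>h. inner (s t) (cvscale \<i> (P t *v (h *\<^sub>R s') + (h *\<^sub>R P' t) *v s t)) + inner (h *\<^sub>R s') (cvscale \<i> (P t *v s t)))) (at t)"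
    unfolding hq_def[abs_def] by (rule has_derivative_inner[OF sd vd])
  define H where "H = inner s' (cvscale \<i> (P t *v s t)) + inner (s t) (cvscale \<i> (P t *v s' + P' t *v s t))"
  have lin: "inner (s t) (cvscale \<i> (P t *v (h *\<^sub>R s') + (h *\<^sub>R P' t) *v s t)) + inner (h *\<^sub>R s') (cvscale \<i> (P t *v s t)) = H * h" for h
  proof -
    have "P t *v (h *\<^sub>R s') + (h *\<^sub>R P' t) *v s t = h *\<^sub>R (P t *v s' + P' t *v s t)"
      by (simp add: bounded_bilinear.scaleR_right[OF bounded_bilinear_matvec]
                    bounded_bilinear.scaleR_left[OF bounded_bilinear_matvec] scaleR_add_right)
    then show ?thesis
      by (simp add: H_def cvscale_scaleR cvscale_add inner_add_right algebra_simps)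
  qed
  have "(hq P s has_real_derivative H) (at t)"
  proof -
    have "(\<lambda>h. inner (s t) (cvscale \<i> (P t *v (h *\<^sub>R s') + (h *\<^sub>R P' t) *v s t)) + inner (h *\<^sub>R s') (cvscale \<i> (P t *v s t))) = (*) H"
      using lin by (auto simp: mult.commute)
    then show ?thesis using hd unfolding has_field_derivative_def by simp
  qed
  moreover have "H \<ge> inner (s t) (s t)"
  proof -
    have HH: "H = 2 * phi2 (P t) * inner (s t) (s t) + inner (s t) (cvscale \<i> ((P' t + mcomm (B t) (P t)) *v s t))"
      unfolding H_def s'_def by (rule A_hderiv[OF su sk])
    have p: "phi2 (P t) \<ge> 9/16"
    proof -
      have "3/4 \<le> mnorm (P t)" using gd unfolding gooddata_def by blast
      then have "3/4 \<le> sqrt (phi2 (P t))" using mnorm_su2[OF su] by simp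
      then have "(3/4)\<^sup>2 \<le> (sqrt (phi2 (P t)))\<^sup>2" by (intro power_mono) auto
      moreover have "phi2 (P t) \<ge> 0" by (simp add: phi2_def)
      ultimately show ?thesis by (simp add: power2_eq_square)
    qed
    have q: "\<bar>inner (s t) (cvscale \<i> ((P' t + mcomm (B t) (P t)) *v s t))\<bar> \<le> 1/8 * inner (s t) (s t)"
      using A6[of "s t" "P' t + mcomm (B t) (P t)"] gd
      by (smt (verit, best) gooddata_def inner_ge_zero mult_right_mono)
    have n0: "inner (s t) (s t) \<ge> 0" by simp
    have "9/8 * inner (s t) (s t) \<le> 2 * phi2 (P t) * inner (s t) (s t)"
      using p n0 by (intro mult_right_mono) auto
    then show ?thesis unfolding HH using q n0 by (simp add: abs_le_iff)
  qed
  ultimately show ?thesis by blast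
qed

lemma growth:
  fixes q :: "real \<Rightarrow> real"
  assumes d: "\<And>x. a \<le> x \<Longrightarrow> \<exists>D. (q has_real_derivative D) (at x) \<and> D \<ge> c * q x"
    and ab: "a \<le> b"
  shows "q b \<ge> q a * exp (c * (b - a))"
proof -
  define r where "r x = q x * exp (- c * x)" for x
  have "r a \<le> r b"
  proof (rule DERIV_nonneg_imp_nondecreasing[OF ab])
    fix x assume x: "a \<le> x" "x \<le> b"
    obtain D where D: "(q has_real_derivative D) (at x)" "D \<ge> c * q x" using d[OF x(1)] by blast
    have "(r has_real_derivative (D * exp (- c * x) + q x * (exp (- c * x) * (- c)))) (at x)"
      unfolding r_def[abs_def] by (auto intro!: derivative_eq_intros D(1))
    moreover have "D * exp (- c * x) + q x * (exp (- c * x) * (- c)) = (D - c * q x) * exp (- c * x)"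
      by (simp add: algebra_simps)
    moreover have "(D - c * q x) * exp (- c * x) \<ge> 0" using D(2) by simp
    ultimately show "\<exists>y. (r has_real_derivative y) (at x) \<and> 0 \<le> y" by metis
  qed
  then have "q a * exp (- c * a) \<le> q b * exp (- c * b)" by (simp add: r_def)
  then have "q a * exp (- c * a) * exp (c * b) \<le> q b * exp (- c * b) * exp (c * b)"
    by (intro mult_right_mono) auto
  then show ?thesis by (simp add: mult.assoc exp_add[symmetric] algebra_simps)
qed

lemma hbound:
  assumes gd: "gooddata P B P'"
  shows "\<bar>hq P s t\<bar> \<le> 5/4 * inner (s t) (s t)"
proof -
  have "\<bar>hq P s t\<bar> \<le> mnorm (P t) * inner (s t) (s t)" unfolding hq_def by (rule A6)
  also have "\<dots> \<le> 5/4 * inner (s t) (s t)"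
    using gd by (intro mult_right_mono) (auto simp: gooddata_def)
  finally show ?thesis .
qed

lemma qderiv:
  assumes gd: "gooddata P B P'" and sol: "solp P B s"
  shows "\<exists>D. ((\<lambda>t. hq P s t + inner (s t) (s t) / 2) has_real_derivative D) (at x) \<and>
             D \<ge> 1 * (hq P s x + inner (s x) (s x) / 2)"
proof -
  obtain H where H: "(hq P s has_real_derivative H) (at x)" "H \<ge> inner (s x) (s x)"
    using deriv_h[OF gd sol] by blast
  have "((\<lambda>t. hq P s t + inner (s t) (s t) / 2) has_real_derivative H + 2 * hq P s x / 2) (at x)"
    by (intro DERIV_add H(1) DERIV_cdivide deriv_n[OF gd sol])
  moreover have "H + 2 * hq P s x / 2 \<ge> 1 * (hq P s x + inner (s x) (s x) / 2)"
  proof -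
    have "H + 2 * hq P s x / 2 - 1 * (hq P s x + inner (s x) (s x) / 2) = H - inner (s x) (s x) / 2" by simp
    moreover have "0 \<le> inner (s x) (s x)" by (rule inner_ge_zero)
    ultimately show ?thesis using H(2) by linarith
  qed
  ultimately show ?thesis by blast
qed

lemma cone_plus:
  assumes gd: "gooddata P B P'" and sol: "solp P B s" and lim: "(s \<longlongrightarrow> 0) at_top"
  shows "hq P s 0 \<le> - inner (s 0) (s 0) / 2"
proof (rule ccontr)
  define q where "q t = hq P s t + inner (s t) (s t) / 2" for t
  assume "\<not> ?thesis"
  then have q0: "q 0 > 0" by (simp add: q_def)
  have gr: "q t \<ge> q 0 * exp (1 * (t - 0))" if "0 \<le> t" for t
    unfolding q_def by (rule growth[OF _ that]) (rule qderiv[OF gd sol])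
  have nlow: "inner (s t) (s t) \<ge> 4/7 * q 0" if "0 \<le> t" for t
  proof -
    have "q 0 \<le> q 0 * exp t" using q0 that by simp
    also have "\<dots> \<le> q t" using gr[OF that] by simp
    also have "\<dots> \<le> 7/4 * inner (s t) (s t)" using hbound[OF gd, of s t] by (simp add: q_def abs_le_iff)
    finally show ?thesis by simp
  qed
  have "((\<lambda>t. inner (s t) (s t)) \<longlongrightarrow> inner 0 0) at_top"
    using tendsto_inner[OF lim lim] by simp
  then have "\<forall>\<^sub>F t in at_top. inner (s t) (s t) < 4/7 * q 0"
    using q0 by (intro order_tendstoD(2)) auto
  then obtain N where "\<And>t. t \<ge> N \<Longrightarrow> inner (s t) (s t) < 4/7 * q 0"
    unfolding eventually_at_top_linorder by blast
  then have "inner (s (max N 0)) (s (max N 0)) < 4/7 * q 0" by simp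
  with nlow[of "max N 0"] show False by simp
qed

lemma h_mono:
  assumes gd: "gooddata P B P'" and sol: "solp P B s" and ab: "a \<le> b"
  shows "hq P s a \<le> hq P s b"
proof (rule DERIV_nonneg_imp_nondecreasing[OF ab])
  fix x
  obtain H where H: "(hq P s has_real_derivative H) (at x)" "H \<ge> inner (s x) (s x)"
    using deriv_h[OF gd sol] by blast
  then show "\<exists>y. (hq P s has_real_derivative y) (at x) \<and> 0 \<le> y"
    using inner_ge_zero[of "s x"] by (meson order_trans)
qed

lemma decay_if_hnonpos:
  assumes gd: "gooddata P B P'" and sol: "solp P B s" and hn: "\<And>t. 0 \<le> t \<Longrightarrow> hq P s t \<le> 0"
  shows "(s \<longlongrightarrow> 0) at_top"
proof -
  define n where "n t = inner (s t) (s t)" for t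
  define q where "q t = hq P s t + n t / 2" for t
  have nd: "(n has_real_derivative 2 * hq P s t) (at t)" for t
    unfolding n_def[abs_def] by (rule deriv_n[OF gd sol])
  have nmono: "n b \<le> n a" if "0 \<le> a" "a \<le> b" for a b
  proof (rule DERIV_nonpos_imp_nonincreasing[OF that(2)])
    fix x assume "a \<le> x" "x \<le> b"
    then show "\<exists>y. (n has_real_derivative y) (at x) \<and> y \<le> 0"
      using nd[of x] hn[of x] that by auto
  qed
  have qle: "q t \<le> 0" if t0: "0 \<le> t" for t
  proof (rule ccontr)
    assume "\<not> q t \<le> 0"
    then have qt: "q t > 0" by simp
    define u where "u = t + n t / (2 * q t) + 1"
    have ut: "t \<le> u" using qt by (simp add: u_def n_def)
    have "q u \<ge> q t * exp (1 * (u - t))"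
      unfolding q_def n_def by (rule growth[OF _ ut]) (rule qderiv[OF gd sol])
    moreover have "q t * (1 + (u - t)) \<le> q t * exp (1 * (u - t))"
      using qt by (intro mult_left_mono) auto
    moreover have "q u \<le> n u / 2" using hn[of u] t0 ut by (simp add: q_def)
    moreover have "n u \<le> n t" using nmono[OF t0 ut] .
    moreover have "q t * (1 + (u - t)) = 2 * q t + n t / 2"
      using qt by (simp add: u_def field_simps)
    ultimately show False using qt by linarith
  qed
  have ndec: "n t \<le> n 0 * exp ((-1) * (t - 0))" if "0 \<le> t" for t
  proof -
    have "(- n) t \<ge> (- n) 0 * exp ((-1) * (t - 0))"
    proof (rule growth[OF _ that])
      fix x :: real assume x: "0 \<le> x"
      have "((- n) has_real_derivative - (2 * hq P s x)) (at x)"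
        using DERIV_minus[OF nd[of x]] by (simp add: fun_Compl_def)
      moreover have "- (2 * hq P s x) \<ge> (-1) * (- n) x" using qle[OF x] by (simp add: q_def)
      ultimately show "\<exists>D. ((- n) has_real_derivative D) (at x) \<and> D \<ge> (-1) * (- n) x" by blast
    qed
    then show ?thesis by simp
  qed
  have "(n \<longlongrightarrow> 0) at_top"
  proof (rule tendsto_sandwich[where f="\<lambda>_. 0" and h="\<lambda>t. n 0 * exp (- t)"])
    show "\<forall>\<^sub>F t in at_top. 0 \<le> n t" by (simp add: n_def)
    show "\<forall>\<^sub>F t in at_top. n t \<le> n 0 * exp (- t)"
      using eventually_ge_at_top[of "0::real"] by eventually_elim (use ndec in auto)
    show "((\<lambda>t. n 0 * exp (- t)) \<longlongrightarrow> 0) at_top" by real_asymp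
  qed auto
  then have "((\<lambda>t. sqrt (n t)) \<longlongrightarrow> sqrt 0) at_top" by (intro tendsto_intros)
  then have "((\<lambda>t. norm (s t)) \<longlongrightarrow> 0) at_top" by (simp add: n_def norm_eq_sqrt_inner)
  then show ?thesis by (rule tendsto_norm_zero_cancel)
qed

definition ci :: "mat \<Rightarrow> mat" where
  "ci P = (\<chi> a b. \<i> * P $ a $ b)"

lemma ci_mv: "(ci P - B) *v w = cvscale \<i> (P *v w) - B *v w"
  by (simp add: ci_def cvscale_def matrix_vector_mult_def vec_eq_iff sum_subtractf sum_distrib_left
      algebra_simps)

lemma ci_row: "(ci P) $ a = cvscale \<i> (P $ a)"
  by (simp add: ci_def cvscale_def vec_eq_iff)

lemma norm_ci: "norm (ci P) = norm P"
proof -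
  have "norm (ci P) = L2_set (\<lambda>a. norm (ci P $ a)) UNIV" by (simp only: norm_vec_def)
  also have "\<dots> = L2_set (\<lambda>a. norm (P $ a)) UNIV" by (simp only: ci_row norm_cvscale_i)
  also have "\<dots> = norm P" by (simp only: norm_vec_def)
  finally show ?thesis .
qed

lemma bounded_linear_ci: "bounded_linear ci"
proof (rule bounded_linear_intro[where K=1])
  show "ci (x + y) = ci x + ci y" for x y by (simp add: ci_def vec_eq_iff algebra_simps)
  show "ci (r *\<^sub>R x) = r *\<^sub>R ci x" for r x by (simp add: ci_def vec_eq_iff scaleR_conv_of_real algebra_simps)
  show "norm (ci x) \<le> norm x * 1" for x by (simp add: norm_ci)
qed

definition Mline :: "(real \<Rightarrow> mat) \<Rightarrow> (real \<Rightarrow> mat) \<Rightarrow> real \<Rightarrow> mat" where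
  "Mline P B t = ci (P t) - B t"

lemma Mline_cont:
  assumes gd: "gooddata P B P'"
  shows "continuous_on UNIV (Mline P B)"
proof -
  have "continuous_on UNIV P"
    using gd unfolding gooddata_def
    by (meson continuous_at_imp_continuous_on has_vector_derivative_continuous)
  then have "continuous_on UNIV (\<lambda>t. ci (P t))"
    by (rule bounded_linear.continuous_on[OF bounded_linear_ci])
  moreover have "continuous_on UNIV B" using gd by (simp add: gooddata_def)
  ultimately show ?thesis unfolding Mline_def[abs_def] by (intro continuous_on_diff)
qed

lemma sol_U:
  assumes gd: "gooddata P B P'"
  shows "solp P B (\<lambda>t. fundU (Mline P B) t *v v)"
  unfolding solp_def
proof
  fix t
  let ?M = "Mline P B" and ?U = "fundU (Mline P B)"
  have "(?U has_derivative (\<lambda>h. h *\<^sub>R (?M t ** ?U t))) (at t)"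
    using fundU_deriv[OF Mline_cont[OF gd]] by (simp add: has_vector_derivative_def)
  then have "((\<lambda>t. ?U t *v v) has_derivative (\<lambda>h. (h *\<^sub>R (?M t ** ?U t)) *v v)) (at t)"
    by (rule bounded_linear.has_derivative[OF bounded_bilinear.bounded_linear_left[OF bounded_bilinear_matvec]])
  moreover have "(\<lambda>h. (h *\<^sub>R (?M t ** ?U t)) *v v) = (\<lambda>h. h *\<^sub>R (cvscale \<i> (P t *v (?U t *v v)) - B t *v (?U t *v v)))"
    by (simp add: bounded_bilinear.scaleR_left[OF bounded_bilinear_matvec] matrix_vector_mul_assoc[symmetric]
        Mline_def ci_mv)
  ultimately show "((\<lambda>t. ?U t *v v) has_vector_derivative (cvscale \<i> (P t *v (?U t *v v)) - B t *v (?U t *v v))) (at t)"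
    by (simp add: has_vector_derivative_def)
qed

lemma basis_vals:
  assumes "su2 P"
  shows "inner (axis 1 1 :: fib) (cvscale \<i> (P *v axis 1 1)) + inner (axis 2 1 :: fib) (cvscale \<i> (P *v axis 2 1)) = 0"
  using su2_entries[OF assms]
  by (simp add: axis_def cvscale_def inner_vec_def sum_2 matrix_vector_mult_def inner_complex_def)

lemma hq_scale: "inner (c *\<^sub>R x) (cvscale \<i> (P *v (c *\<^sub>R x))) = c\<^sup>2 * inner x (cvscale \<i> (P *v x))"
  by (simp add: bounded_bilinear.scaleR_right[OF bounded_bilinear_matvec] cvscale_scaleR power2_eq_square)

lemma exists_nonpos_at:
  fixes A :: mat
  assumes su: "su2 Pk"
  shows "\<exists>w. w \<noteq> 0 \<and> inner (A *v w) (cvscale \<i> (Pk *v (A *v w))) \<le> 0"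
proof -
  obtain e :: fib where e: "e \<noteq> 0" "inner e (cvscale \<i> (Pk *v e)) \<le> 0"
  proof (cases "inner (axis 1 1 :: fib) (cvscale \<i> (Pk *v axis 1 1)) \<le> 0")
    case True
    then show ?thesis using that[of "axis 1 1"] by (simp add: axis_eq_0_iff)
  next
    case False
    then show ?thesis using that[of "axis 2 1"] basis_vals[OF su] by (simp add: axis_eq_0_iff)
  qed
  have lin: "linear (\<lambda>w. A *v w)" using bounded_linear.linear[OF bl_matvec] .
  show ?thesis
  proof (cases "inj (\<lambda>w. A *v w)")
    case True
    then have "surj (\<lambda>w. A *v w)" using linear_injective_imp_surjective[OF lin] by blast
    then obtain w where w: "A *v w = e" by (metis surjD)
    have "w \<noteq> 0" using w e(1) by auto
    then show ?thesis using w e(2) by auto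
  next
    case False
    then obtain w where "w \<noteq> 0" "A *v w = 0" using linear_injective_0[OF lin] by auto
    then show ?thesis by auto
  qed
qed

lemma exists_decay:
  assumes gd: "gooddata P B P'"
  shows "\<exists>s. solp P B s \<and> s 0 \<noteq> 0 \<and> (s \<longlongrightarrow> 0) at_top"
proof -
  define U where "U = fundU (Mline P B)"
  define G where "G t v = inner (U t *v v) (cvscale \<i> (P t *v (U t *v v)))" for t v
  have sol: "solp P B (\<lambda>t. U t *v v)" for v unfolding U_def by (rule sol_U[OF gd])
  have hqG: "hq P (\<lambda>t. U t *v v) t = G t v" for t v by (simp add: hq_def G_def)
  have step: "\<exists>v. v \<in> sphere 0 1 \<and> (\<forall>t. 0 \<le> t \<and> t \<le> real k \<longrightarrow> G t v \<le> 0)" for k :: nat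
  proof -
    have su: "su2 (P (real k))" using gd by (simp add: gooddata_def)
    obtain w where w: "w \<noteq> 0" "G (real k) w \<le> 0"
      using exists_nonpos_at[OF su, of "U (real k)"] unfolding G_def by blast
    define c where "c = 1 / norm w"
    have Gs: "G t (c *\<^sub>R w) = c\<^sup>2 * G t w" for t
      unfolding G_def by (simp add: bounded_bilinear.scaleR_right[OF bounded_bilinear_matvec] cvscale_scaleR power2_eq_square)
    have "G t w \<le> 0" if "0 \<le> t" "t \<le> real k" for t
      using h_mono[OF gd sol[of w] that(2)] w(2) by (simp add: hqG)
    then have "\<forall>t. 0 \<le> t \<and> t \<le> real k \<longrightarrow> G t (c *\<^sub>R w) \<le> 0"
      by (simp add: Gs mult_nonneg_nonpos)
    moreover have "c *\<^sub>R w \<in> sphere 0 1" using w(1) by (simp add: c_def)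
    ultimately show ?thesis by blast
  qed
  then obtain f where f: "\<And>k. f k \<in> sphere 0 1" "\<And>k t. 0 \<le> t \<Longrightarrow> t \<le> real k \<Longrightarrow> G t (f k) \<le> 0"
    by metis
  have "seq_compact (sphere (0::fib) 1)" by (intro compact_imp_seq_compact compact_sphere)
  then obtain l r where l: "l \<in> sphere 0 1" and r: "strict_mono (r :: nat \<Rightarrow> nat)" and lim: "(f \<circ> r) \<longlonglongrightarrow> l"
    using seq_compactE f(1) by metis
  have Gl: "G t l \<le> 0" if t0: "0 \<le> t" for t
  proof -
    have t1: "(\<lambda>n. U t *v f (r n)) \<longlonglongrightarrow> U t *v l"
      using bounded_linear.tendsto[OF bl_matvec lim] by (simp add: o_def)
    have t2: "(\<lambda>n. cvscale \<i> (P t *v (U t *v f (r n)))) \<longlonglongrightarrow> cvscale \<i> (P t *v (U t *v l))"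
      by (rule bounded_linear.tendsto[OF bounded_linear_cvscale bounded_linear.tendsto[OF bl_matvec t1]])
    have t3: "(\<lambda>n. G t (f (r n))) \<longlonglongrightarrow> G t l"
      unfolding G_def by (rule tendsto_inner[OF t1 t2])
    have "\<forall>n\<ge>nat \<lceil>t\<rceil>. G t (f (r n)) \<le> 0"
    proof (intro allI impI)
      fix n assume n: "nat \<lceil>t\<rceil> \<le> n"
      have "t \<le> real n" using n t0 by linarith
      also have "\<dots> \<le> real (r n)" using seq_suble[OF r, of n] by simp
      finally show "G t (f (r n)) \<le> 0" using f(2) t0 by blast
    qed
    then show ?thesis by (intro LIMSEQ_le_const2[OF t3]) blast
  qed
  have "solp P B (\<lambda>t. U t *v l)" by (rule sol)
  moreover have "U 0 *v l \<noteq> 0" using l by (auto simp: U_def fundU_0)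
  moreover have "((\<lambda>t. U t *v l) \<longlongrightarrow> 0) at_top"
    by (rule decay_if_hnonpos[OF gd sol]) (simp add: hqG Gl)
  ultimately show ?thesis by blast
qed

lemma madj_neg: "madj (- P) = - madj P"
  by (simp add: madj_def vec_eq_iff)

lemma su2_neg: "su2 P \<Longrightarrow> su2 (- P)"
  by (simp add: su2_def madj_neg neg_eq_iff_add_eq_0)

lemma mv_neg: "(- (P::mat)) *v (v::fib) = - (P *v v)"
  using bounded_bilinear.minus_left[OF bounded_bilinear_matvec] by simp

lemma mnorm_neg: "mnorm (- P) = mnorm P"
  unfolding mnorm_def mv_neg by (rule onorm_neg)

lemma mcomm_neg: "mcomm (- B) (- P) = mcomm B P"
  using bounded_bilinear.minus_left[OF bounded_bilinear_matmul] bounded_bilinear.minus_right[OF bounded_bilinear_matmul]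
  by (simp add: mcomm_def)

lemma cvscale_neg: "cvscale c (- x) = - cvscale c x"
  by (simp add: cvscale_def vec_eq_iff)

lemma rev_deriv:
  assumes "(f has_vector_derivative f') (at (- t))"
  shows "((\<lambda>t. f (- t)) has_vector_derivative - f') (at t)"
proof -
  have "(uminus has_vector_derivative (-1)) (at t)"
    by (auto intro!: derivative_eq_intros simp: has_real_derivative_iff_has_vector_derivative[symmetric])
  from vector_diff_chain_at[OF this assms] show ?thesis by (simp add: o_def)
qed

lemma rev_good:
  assumes gd: "gooddata P B P'"
  shows "gooddata (\<lambda>t. - P (- t)) (\<lambda>t. - B (- t)) (\<lambda>t. P' (- t))"
  unfolding gooddata_def
proof (intro conjI allI)
  fix t
  show "su2 (- P (- t))" using gd by (simp add: gooddata_def su2_neg)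
  show "madj (- B (- t)) = - (- B (- t))" using gd by (simp add: gooddata_def madj_neg)
  have "(P has_vector_derivative P' (- t)) (at (- t))" using gd by (simp add: gooddata_def)
  from has_vector_derivative_minus[OF rev_deriv[OF this]]
  show "((\<lambda>t. - P (- t)) has_vector_derivative P' (- t)) (at t)" by simp
  show "3/4 \<le> mnorm (- P (- t))" "mnorm (- P (- t)) \<le> 5/4" using gd by (auto simp: gooddata_def mnorm_neg)
  show "mnorm (P' (- t) + mcomm (- B (- t)) (- P (- t))) \<le> 1/8" using gd by (simp add: gooddata_def mcomm_neg)
next
  have "continuous_on UNIV B" using gd by (simp add: gooddata_def)
  then show "continuous_on UNIV (\<lambda>t. - B (- t))"
  proof (intro continuous_on_minus)
    have "continuous_on UNIV (B \<circ> uminus)"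
      by (rule continuous_on_compose) (auto intro: continuous_on_minus continuous_on_id continuous_on_subset[OF \<open>continuous_on UNIV B\<close>])
    then show "continuous_on UNIV (\<lambda>t. B (- t))" by (simp add: o_def)
  qed
qed

lemma rev_sol:
  assumes sol: "solp P B s"
  shows "solp (\<lambda>t. - P (- t)) (\<lambda>t. - B (- t)) (\<lambda>t. s (- t))"
  unfolding solp_def
proof
  fix t
  have "(s has_vector_derivative (cvscale \<i> (P (- t) *v s (- t)) - B (- t) *v s (- t))) (at (- t))"
    using sol by (simp add: solp_def)
  from rev_deriv[OF this]
  show "((\<lambda>t. s (- t)) has_vector_derivative cvscale \<i> ((- P (- t)) *v s (- t)) - (- B (- t)) *v s (- t)) (at t)"
    by (simp add: mv_neg cvscale_neg)
qed

definition Lp :: "(real \<Rightarrow> mat) \<Rightarrow> (real \<Rightarrow> mat) \<Rightarrow> fib set" where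
  "Lp P B = {s 0 | s. solp P B s \<and> (s \<longlongrightarrow> 0) at_top}"

definition Lm :: "(real \<Rightarrow> mat) \<Rightarrow> (real \<Rightarrow> mat) \<Rightarrow> fib set" where
  "Lm P B = {s 0 | s. solp P B s \<and> (s \<longlongrightarrow> 0) at_bot}"

definition Wq :: "mat \<Rightarrow> fib \<Rightarrow> real" where
  "Wq P x = inner x (cvscale \<i> (P *v x))"

lemma Lp_cone:
  assumes gd: "gooddata P B P'" and a: "a \<in> Lp P B"
  shows "Wq (P 0) a \<le> - inner a a / 2"
  using a cone_plus[OF gd] unfolding Lp_def Wq_def hq_def by auto

lemma at_bot_to_top:
  fixes s :: "real \<Rightarrow> fib"
  assumes "(s \<longlongrightarrow> (0::fib)) at_bot"
  shows "((\<lambda>t. s (- t)) \<longlongrightarrow> 0) at_top"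
  by (rule filterlim_compose[OF assms]) (rule filterlim_uminus_at_bot_at_top)

lemma at_top_to_bot:
  fixes s :: "real \<Rightarrow> fib"
  assumes "(s \<longlongrightarrow> (0::fib)) at_top"
  shows "((\<lambda>t. s (- t)) \<longlongrightarrow> 0) at_bot"
  by (rule filterlim_compose[OF assms]) (rule filterlim_uminus_at_top_at_bot)

lemma Lm_cone:
  assumes gd: "gooddata P B P'" and b: "b \<in> Lm P B"
  shows "Wq (P 0) b \<ge> inner b b / 2"
proof -
  obtain s where s: "b = s 0" "solp P B s" "(s \<longlongrightarrow> 0) at_bot" using b by (auto simp: Lm_def)
  have "hq (\<lambda>t. - P (- t)) (\<lambda>t. s (- t)) 0 \<le> - inner (s (- 0)) (s (- 0)) / 2"
    by (rule cone_plus[OF rev_good[OF gd] rev_sol[OF s(2)] at_bot_to_top[OF s(3)]])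
  then show ?thesis using s(1) by (simp add: hq_def Wq_def mv_neg cvscale_neg)
qed

lemma Lp_ex:
  assumes gd: "gooddata P B P'"
  shows "\<exists>a. a \<in> Lp P B \<and> a \<noteq> 0"
  using exists_decay[OF gd] unfolding Lp_def by blast

lemma Lm_ex:
  assumes gd: "gooddata P B P'"
  shows "\<exists>b. b \<in> Lm P B \<and> b \<noteq> 0"
proof -
  obtain s where s: "solp (\<lambda>t. - P (- t)) (\<lambda>t. - B (- t)) s" "s 0 \<noteq> 0" "(s \<longlongrightarrow> 0) at_top"
    using exists_decay[OF rev_good[OF gd]] by blast
  have "solp (\<lambda>t. - (- P (- (- t)))) (\<lambda>t. - (- B (- (- t)))) (\<lambda>t. s (- t))"
    by (rule rev_sol[OF s(1)])
  then have "solp P B (\<lambda>t. s (- t))" by simp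
  moreover have "((\<lambda>t. s (- t)) \<longlongrightarrow> 0) at_bot" by (rule at_top_to_bot[OF s(3)])
  ultimately show ?thesis using s(2) unfolding Lm_def by force
qed

lemma mv_cscale: "P *v cvscale c x = cvscale c (P *v x)"
  by (simp add: cvscale_def matrix_vector_mult_def vec_eq_iff sum_distrib_left algebra_simps)

lemma cscale_comm: "cvscale c (cvscale d x) = cvscale d (cvscale c x)"
  by (simp add: cvscale_def vec_eq_iff algebra_simps)

lemma solp_add:
  assumes "solp P B s1" "solp P B s2"
  shows "solp P B (\<lambda>t. s1 t + s2 t)"
  using assms unfolding solp_def
  by (auto intro!: has_vector_derivative_add[THEN has_vector_derivative_eq_rhs]
           simp: matrix_vector_right_distrib cvscale_add algebra_simps)

lemma solp_cscale:
  assumes "solp P B s"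
  shows "solp P B (\<lambda>t. cvscale c (s t))"
  unfolding solp_def
proof
  fix t
  have "(s has_derivative (\<lambda>h. h *\<^sub>R (cvscale \<i> (P t *v s t) - B t *v s t))) (at t)"
    using assms by (simp add: solp_def has_vector_derivative_def)
  from bounded_linear.has_derivative[OF bounded_linear_cvscale this, of c]
  have "((\<lambda>t. cvscale c (s t)) has_derivative (\<lambda>h. h *\<^sub>R cvscale c (cvscale \<i> (P t *v s t) - B t *v s t))) (at t)"
    by (simp add: cvscale_scaleR)
  moreover have "cvscale c (cvscale \<i> (P t *v s t) - B t *v s t) = cvscale \<i> (P t *v cvscale c (s t)) - B t *v cvscale c (s t)"
    by (simp add: cvscale_diff mv_cscale cscale_comm)
  ultimately show "((\<lambda>t. cvscale c (s t)) has_vector_derivative cvscale \<i> (P t *v cvscale c (s t)) - B t *v cvscale c (s t)) (at t)"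
    by (simp add: has_vector_derivative_def)
qed

lemma Lp_add: "a \<in> Lp P B \<Longrightarrow> a' \<in> Lp P B \<Longrightarrow> a + a' \<in> Lp P B"
  unfolding Lp_def
proof clarify
  fix s s' assume "solp P B s" "(s \<longlongrightarrow> 0) at_top" "solp P B s'" "(s' \<longlongrightarrow> 0) at_top"
  then show "\<exists>sa. s 0 + s' 0 = sa 0 \<and> solp P B sa \<and> (sa \<longlongrightarrow> 0) at_top"
    by (intro exI[of _ "\<lambda>t. s t + s' t"]) (auto intro: solp_add tendsto_add_zero)
qed

lemma Lm_add: "a \<in> Lm P B \<Longrightarrow> a' \<in> Lm P B \<Longrightarrow> a + a' \<in> Lm P B"
  unfolding Lm_def
proof clarify
  fix s s' assume "solp P B s" "(s \<longlongrightarrow> 0) at_bot" "solp P B s'" "(s' \<longlongrightarrow> 0) at_bot"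
  then show "\<exists>sa. s 0 + s' 0 = sa 0 \<and> solp P B sa \<and> (sa \<longlongrightarrow> 0) at_bot"
    by (intro exI[of _ "\<lambda>t. s t + s' t"]) (auto intro: solp_add tendsto_add_zero)
qed

lemma cvscale_0: "cvscale c 0 = 0" by (simp add: cvscale_def vec_eq_iff)

lemma Lp_cscale: "a \<in> Lp P B \<Longrightarrow> cvscale c a \<in> Lp P B"
  unfolding Lp_def
proof clarify
  fix s assume "solp P B s" "(s \<longlongrightarrow> 0) at_top"
  then show "\<exists>sa. cvscale c (s 0) = sa 0 \<and> solp P B sa \<and> (sa \<longlongrightarrow> 0) at_top"
    using bounded_linear.tendsto[OF bounded_linear_cvscale, of s 0 at_top c]
    by (intro exI[of _ "\<lambda>t. cvscale c (s t)"]) (auto intro: solp_cscale simp: cvscale_0)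
qed

lemma Lm_cscale: "a \<in> Lm P B \<Longrightarrow> cvscale c a \<in> Lm P B"
  unfolding Lm_def
proof clarify
  fix s assume "solp P B s" "(s \<longlongrightarrow> 0) at_bot"
  then show "\<exists>sa. cvscale c (s 0) = sa 0 \<and> solp P B sa \<and> (sa \<longlongrightarrow> 0) at_bot"
    using bounded_linear.tendsto[OF bounded_linear_cvscale, of s 0 at_bot c]
    by (intro exI[of _ "\<lambda>t. cvscale c (s t)"]) (auto intro: solp_cscale simp: cvscale_0)
qed

lemma cvscale_m1: "cvscale (-1) x = - x" by (simp add: cvscale_def vec_eq_iff)

lemma Lp_diff: "a \<in> Lp P B \<Longrightarrow> a' \<in> Lp P B \<Longrightarrow> a - a' \<in> Lp P B"
  using Lp_add[of a P B "cvscale (-1) a'"] Lp_cscale[of a' P B "-1"] by (simp add: cvscale_m1)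

lemma Lm_diff: "a \<in> Lm P B \<Longrightarrow> a' \<in> Lm P B \<Longrightarrow> a - a' \<in> Lm P B"
  using Lm_add[of a P B "cvscale (-1) a'"] Lm_cscale[of a' P B "-1"] by (simp add: cvscale_m1)

definition cinner :: "fib \<Rightarrow> fib \<Rightarrow> complex" where
  "cinner x y = (\<Sum>j\<in>UNIV. cnj (x $ j) * y $ j)"

lemma inner_cinner: "inner x y = Re (cinner x y)"
  by (simp add: cinner_def inner_vec_def sum_2 inner_complex_def)

lemma cinner_cscale: "cinner (cvscale z x) (cvscale z y) = (cnj z * z) * cinner x y"
  by (simp add: cinner_def cvscale_def sum_2 algebra_simps)

lemma Wq_cscale: "Wq P (cvscale z x) = (cmod z)\<^sup>2 * Wq P x"
proof -
  have "Wq P (cvscale z x) = Re (cinner (cvscale z x) (cvscale z (cvscale \<i> (P *v x))))"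
    by (simp add: Wq_def inner_cinner mv_cscale cscale_comm)
  also have "\<dots> = Re ((cnj z * z) * cinner x (cvscale \<i> (P *v x)))" by (simp add: cinner_cscale)
  also have "cnj z * z = of_real ((cmod z)\<^sup>2)" using complex_norm_square[of z] by (simp add: mult.commute)
  also have "Re (of_real ((cmod z)\<^sup>2) * cinner x (cvscale \<i> (P *v x))) = (cmod z)\<^sup>2 * Wq P x"
    by (simp add: Wq_def inner_cinner)
  finally show ?thesis .
qed

lemma Wdiff:
  assumes "su2 P"
  shows "Wq P b - Wq P a = inner (a + b) (cvscale \<i> (P *v (b - a)))"
  using su2_entries[OF assms]
  by (simp add: Wq_def cvscale_def inner_vec_def sum_2 matrix_vector_mult_def inner_complex_def algebra_simps)

lemma span2:
  fixes a b v :: fib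
  assumes det: "a$1 * b$2 - a$2 * b$1 \<noteq> 0"
  shows "v = cvscale ((v$1 * b$2 - v$2 * b$1) / (a$1 * b$2 - a$2 * b$1)) a
           + cvscale ((a$1 * v$2 - a$2 * v$1) / (a$1 * b$2 - a$2 * b$1)) b"
proof -
  define d where "d = a$1 * b$2 - a$2 * b$1"
  have h: "c = x / d * p + y / d * q" if "x * p + y * q = c * d" for x y p q c :: complex
  proof -
    have "x / d * p + y / d * q = (x * p + y * q) / d" by (simp add: add_divide_distrib)
    also have "\<dots> = c" using that det by (simp add: d_def)
    finally show ?thesis by simp
  qed
  have "v$1 = (v$1 * b$2 - v$2 * b$1) / d * a$1 + (a$1 * v$2 - a$2 * v$1) / d * b$1"
    by (rule h) (simp add: d_def algebra_simps)
  moreover have "v$2 = (v$1 * b$2 - v$2 * b$1) / d * a$2 + (a$1 * v$2 - a$2 * v$1) / d * b$2"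
    by (rule h) (simp add: d_def algebra_simps)
  ultimately show ?thesis by (simp add: vec_eq_iff forall_2 cvscale_def d_def)
qed

lemma fib_eq_0: "(x::fib) = 0 \<longleftrightarrow> x$1 = 0 \<and> x$2 = 0"
  by (simp add: vec_eq_iff forall_2)

lemma det_zero_dep:
  fixes a b :: fib
  assumes a: "a \<noteq> 0" and det: "a$1 * b$2 - a$2 * b$1 = 0"
  shows "\<exists>z. b = cvscale z a"
proof (cases "a$1 = 0")
  case False
  have "b = cvscale (b$1 / a$1) a"
    using False det by (simp add: vec_eq_iff forall_2 cvscale_def field_simps)
  then show ?thesis by blast
next
  case True
  then have a2: "a$2 \<noteq> 0" using a by (simp add: fib_eq_0)
  then have "b$1 = 0" using det True by simp
  then have "b = cvscale (b$2 / a$2) a"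
    using True a2 by (simp add: vec_eq_iff forall_2 cvscale_def)
  then show ?thesis by blast
qed

lemma bound_ab:
  assumes su: "su2 P0" and ha: "Wq P0 a \<le> - inner a a / 2" and hb: "Wq P0 b \<ge> inner b b / 2"
  shows "norm (a - b) \<le> 4 * mnorm P0 * norm (a + b)"
proof -
  have e2: "inner (a - b) (a - b) \<le> 2 * (inner a a + inner b b)"
  proof -
    have "inner (a - b) (a - b) + inner (a + b) (a + b) = 2 * (inner a a + inner b b)"
      by (simp add: inner_diff_left inner_diff_right inner_add_left inner_add_right inner_commute)
    moreover have "inner (a + b) (a + b) \<ge> 0" by simp
    ultimately show ?thesis by linarith
  qed
  have e3: "Wq P0 b - Wq P0 a \<le> norm (a + b) * (mnorm P0 * norm (a - b))"
  proof -
    have "Wq P0 b - Wq P0 a \<le> \<bar>inner (a + b) (cvscale \<i> (P0 *v (b - a)))\<bar>" using Wdiff[OF su, of b a] by simp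
    also have "\<dots> \<le> norm (a + b) * norm (cvscale \<i> (P0 *v (b - a)))" by (rule Cauchy_Schwarz_ineq2)
    also have "\<dots> \<le> norm (a + b) * (mnorm P0 * norm (b - a))"
      by (intro mult_left_mono) (auto simp: norm_cvscale_i norm_matvec_mnorm)
    finally show ?thesis by (simp add: norm_minus_commute)
  qed
  have eq: "norm (a + b) * (mnorm P0 * norm (a - b)) * 4 = 4 * mnorm P0 * norm (a + b) * norm (a - b)"
    by (simp add: mult_ac)
  have "(norm (a - b))\<^sup>2 = inner (a - b) (a - b)" by (simp add: power2_norm_eq_inner)
  also have "\<dots> \<le> 2 * (inner a a + inner b b)" by (rule e2)
  also have "\<dots> \<le> 4 * (Wq P0 b - Wq P0 a)" using ha hb by (simp add: field_simps)
  also have "\<dots> \<le> 4 * (norm (a + b) * (mnorm P0 * norm (a - b)))" using e3 by simp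
  also have "\<dots> = 4 * mnorm P0 * norm (a + b) * norm (a - b)" by (simp add: mult_ac)
  finally have "(norm (a - b))\<^sup>2 \<le> 4 * mnorm P0 * norm (a + b) * norm (a - b)" .
  then have "norm (a - b) * norm (a - b) \<le> (4 * mnorm P0 * norm (a + b)) * norm (a - b)"
    by (simp add: power2_eq_square)
  moreover have "0 \<le> mnorm P0" unfolding mnorm_def by (rule onorm_pos_le[OF bl_matvec])
  ultimately show ?thesis
    by (cases "norm (a - b) = 0") (auto simp: mult_le_cancel_right)
qed

lemma line_onorm:
  assumes gd: "gooddata P B P'"
  shows "onorm (\<lambda>v. THE w. \<exists>a\<in>Lp P B. \<exists>b\<in>Lm P B. v = a + b \<and> w = a - b) \<le> 5"
proof (rule onorm_le)
  fix v :: fib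
  have su: "su2 (P 0)" and mn: "mnorm (P 0) \<le> 5/4" using gd by (auto simp: gooddata_def)
  obtain a0 where a0: "a0 \<in> Lp P B" "a0 \<noteq> 0" using Lp_ex[OF gd] by blast
  obtain b0 where b0: "b0 \<in> Lm P B" "b0 \<noteq> 0" using Lm_ex[OF gd] by blast
  have det: "a0$1 * b0$2 - a0$2 * b0$1 \<noteq> 0"
  proof
    assume "a0$1 * b0$2 - a0$2 * b0$1 = 0"
    then obtain z where z: "b0 = cvscale z a0" using det_zero_dep[OF a0(2)] by blast
    have "Wq (P 0) b0 = (cmod z)\<^sup>2 * Wq (P 0) a0" by (simp add: z Wq_cscale)
    moreover have "Wq (P 0) a0 \<le> 0" using Lp_cone[OF gd a0(1)] inner_ge_zero[of a0] by linarith
    ultimately have "Wq (P 0) b0 \<le> 0" by (simp add: mult_nonneg_nonpos)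
    moreover have "Wq (P 0) b0 \<ge> inner b0 b0 / 2" by (rule Lm_cone[OF gd b0(1)])
    moreover have "inner b0 b0 > 0" using b0(2) by simp
    ultimately show False by linarith
  qed
  define a where "a = cvscale ((v$1 * b0$2 - v$2 * b0$1) / (a0$1 * b0$2 - a0$2 * b0$1)) a0"
  define b where "b = cvscale ((a0$1 * v$2 - a0$2 * v$1) / (a0$1 * b0$2 - a0$2 * b0$1)) b0"
  have ab: "a \<in> Lp P B" "b \<in> Lm P B" "v = a + b"
    using Lp_cscale[OF a0(1)] Lm_cscale[OF b0(1)] span2[OF det, of v] by (auto simp: a_def b_def)
  have uniq: "w = a - b" if a'b': "a' \<in> Lp P B" "b' \<in> Lm P B" "v = a' + b'" "w = a' - b'" for w a' b'
  proof -
    define x where "x = a - a'"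
    have x1: "x \<in> Lp P B" unfolding x_def by (rule Lp_diff[OF ab(1) a'b'(1)])
    have "x = b' - b" using ab(3) a'b'(3) by (simp add: x_def algebra_simps)
    then have x2: "x \<in> Lm P B" using Lm_diff[OF a'b'(2) ab(2)] by simp
    have "inner x x \<le> 0" using Lp_cone[OF gd x1] Lm_cone[OF gd x2] by linarith
    then have "inner x x = 0" using inner_ge_zero[of x] by linarith
    then have "x = 0" by simp
    then show ?thesis using a'b' ab(3) by (simp add: x_def algebra_simps)
  qed
  have "(THE w. \<exists>a\<in>Lp P B. \<exists>b\<in>Lm P B. v = a + b \<and> w = a - b) = a - b"
    by (rule the_equality) (use ab uniq in blast)+
  moreover have "norm (a - b) \<le> 5 * norm v"
  proof -
    have "norm (a - b) \<le> 4 * mnorm (P 0) * norm (a + b)"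
      by (rule bound_ab[OF su Lp_cone[OF gd ab(1)] Lm_cone[OF gd ab(2)]])
    also have "\<dots> \<le> 4 * (5/4) * norm (a + b)" using mn by (intro mult_right_mono) auto
    finally show ?thesis using ab(3) by simp
  qed
  ultimately show "norm (THE w. \<exists>a\<in>Lp P B. \<exists>b\<in>Lm P B. v = a + b \<and> w = a - b) \<le> 5 * norm v" by simp
qed

lemma madj_add: "madj (M + N) = madj M + madj N"
  by (simp add: madj_def vec_eq_iff)

lemma madj_scaleR: "madj (c *\<^sub>R M) = c *\<^sub>R madj M"
  by (simp add: madj_def vec_eq_iff; simp add: scaleR_conv_of_real)

lemma mv_scaleR_left: "(c *\<^sub>R (M::mat)) *v (v::fib) = c *\<^sub>R (M *v v)"
  using bounded_bilinear.scaleR_left[OF bounded_bilinear_matvec] by simp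

lemma mv_add_left: "((M::mat) + N) *v (v::fib) = M *v v + N *v v"
  using bounded_bilinear.add_left[OF bounded_bilinear_matvec] by simp

lemma mnorm_add: "mnorm (M + N) \<le> mnorm M + mnorm N"
  unfolding mnorm_def mv_add_left by (rule onorm_triangle[OF bl_matvec bl_matvec])

lemma mnorm_scaleR: "mnorm (c *\<^sub>R M) = \<bar>c\<bar> * mnorm M"
  unfolding mnorm_def mv_scaleR_left by (rule onorm_scaleR[OF bl_matvec])

lemma mnorm_nonneg: "0 \<le> mnorm M"
  unfolding mnorm_def by (rule onorm_pos_le[OF bl_matvec])

lemma mcomm_add_left: "mcomm (M + N) P = mcomm M P + mcomm N P"
  using bounded_bilinear.add_left[OF bounded_bilinear_matmul] bounded_bilinear.add_right[OF bounded_bilinear_matmul]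
  by (simp add: mcomm_def algebra_simps)

lemma mcomm_scaleR_left: "mcomm (c *\<^sub>R M) P = c *\<^sub>R mcomm M P"
  using bounded_bilinear.scaleR_left[OF bounded_bilinear_matmul] bounded_bilinear.scaleR_right[OF bounded_bilinear_matmul]
  by (simp add: mcomm_def scaleR_diff_right)

lemma cvscale_of_real: "cvscale (complex_of_real c) w = c *\<^sub>R w"
  by (simp add: cvscale_def vec_eq_iff; simp add: scaleR_conv_of_real)

lemma u_expand: "(u::real^3) = u$1 *\<^sub>R axis 1 1 + u$2 *\<^sub>R axis 2 1 + u$3 *\<^sub>R axis 3 1"
  by (simp add: vec_eq_iff forall_3 axis_def)

definition lineP :: "(pt \<Rightarrow> mat) \<Rightarrow> pt \<Rightarrow> pt \<Rightarrow> real \<Rightarrow> mat" where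
  "lineP Phi x u t = Phi (x + t *\<^sub>R u)"

definition lineB :: "(pt \<Rightarrow> 3 \<Rightarrow> mat) \<Rightarrow> pt \<Rightarrow> pt \<Rightarrow> real \<Rightarrow> mat" where
  "lineB A x u t = (\<Sum>j\<in>UNIV. (u$j) *\<^sub>R A (x + t *\<^sub>R u) j)"

definition lineP' :: "(pt \<Rightarrow> mat) \<Rightarrow> pt \<Rightarrow> pt \<Rightarrow> real \<Rightarrow> mat" where
  "lineP' Phi x u t = (\<Sum>j\<in>UNIV. (u$j) *\<^sub>R pd j Phi (x + t *\<^sub>R u))"

lemma lineB_mv: "lineB A x u t *v w = (\<Sum>j\<in>UNIV. cvscale (complex_of_real (u $ j)) (A (x + t *\<^sub>R u) j *v w))"
  unfolding lineB_def
  by (simp add: bounded_bilinear.sum_left[OF bounded_bilinear_matvec] mv_scaleR_left cvscale_of_real)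

lemma line_sol_iff: "line_sol A Phi x u s \<longleftrightarrow> solp (lineP Phi x u) (lineB A x u) s"
  unfolding line_sol_def solp_def lineB_mv lineP_def ..

lemma Lplus_eq: "Lplus A Phi x u = Lp (lineP Phi x u) (lineB A x u)"
  unfolding Lplus_def Lp_def line_sol_iff ..

lemma Lminus_eq: "Lminus A Phi x u = Lm (lineP Phi x u) (lineB A x u)"
  unfolding Lminus_def Lm_def line_sol_iff ..

lemma lineP_deriv:
  assumes d: "\<And>y. Phi differentiable (at y)"
  shows "(lineP Phi x u has_vector_derivative lineP' Phi x u t) (at t)"
proof -
  define y where "y = x + t *\<^sub>R u"
  define D where "D = frechet_derivative Phi (at y)"
  have Dd: "(Phi has_derivative D) (at y)" using d[of y] unfolding D_def frechet_derivative_works .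
  have lD: "linear D" using Dd by (rule has_derivative_linear)
  have ld: "((\<lambda>t. x + t *\<^sub>R u) has_derivative (\<lambda>h. h *\<^sub>R u)) (at t)"
    by (auto intro!: derivative_eq_intros)
  have "((\<lambda>t. Phi (x + t *\<^sub>R u)) has_derivative (\<lambda>h. D (h *\<^sub>R u))) (at t)"
    using has_derivative_compose[OF ld Dd[unfolded y_def]] by simp
  moreover have "D (h *\<^sub>R u) = h *\<^sub>R lineP' Phi x u t" for h
  proof -
    have "D u = u$1 *\<^sub>R D (axis 1 1) + u$2 *\<^sub>R D (axis 2 1) + u$3 *\<^sub>R D (axis 3 1)"
      by (subst u_expand) (simp add: linear_add[OF lD] linear_cmul[OF lD])
    also have "\<dots> = lineP' Phi x u t"
      by (simp add: lineP'_def sum_3 pd_def D_def y_def)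
    finally show ?thesis by (simp add: linear_cmul[OF lD])
  qed
  ultimately show ?thesis by (simp add: has_vector_derivative_def lineP_def[abs_def])
qed

lemma line_good:
  assumes hA: "\<And>y j. su2 (A y j)" and hPhi: "\<And>y. su2 (Phi y)"
    and dPhi: "\<And>y. Phi differentiable (at y)"
    and cA: "\<And>j. continuous_on UNIV (\<lambda>y. A y j)"
    and u: "norm u = 1"
    and b1: "\<And>t. 3/4 \<le> mnorm (Phi (x + t *\<^sub>R u)) \<and> mnorm (Phi (x + t *\<^sub>R u)) \<le> 5/4"
    and b2: "\<And>t. (\<Sum>j\<in>UNIV. mnorm (covPhi A Phi j (x + t *\<^sub>R u))) \<le> 1/8"
  shows "gooddata (lineP Phi x u) (lineB A x u) (lineP' Phi x u)"
  unfolding gooddata_def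
proof (intro conjI allI)
  fix t
  define y where "y = x + t *\<^sub>R u"
  show "su2 (lineP Phi x u t)" by (simp add: lineP_def hPhi)
  have skA: "madj (A y j) = - A y j" for j using hA[of y j] by (simp add: su2_def)
  show "madj (lineB A x u t) = - lineB A x u t"
    by (simp add: lineB_def sum_3 madj_add madj_scaleR skA y_def[symmetric])
  show "(lineP Phi x u has_vector_derivative lineP' Phi x u t) (at t)" by (rule lineP_deriv[OF dPhi])
  show "3/4 \<le> mnorm (lineP Phi x u t)" "mnorm (lineP Phi x u t) \<le> 5/4" using b1[of t] by (auto simp: lineP_def)
  have eq: "lineP' Phi x u t + mcomm (lineB A x u t) (lineP Phi x u t)
      = u$1 *\<^sub>R covPhi A Phi 1 y + u$2 *\<^sub>R covPhi A Phi 2 y + u$3 *\<^sub>R covPhi A Phi 3 y"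
    by (simp add: lineP'_def lineB_def lineP_def sum_3 mcomm_add_left mcomm_scaleR_left covPhi_def
        y_def[symmetric] scaleR_add_right algebra_simps)
  have uj: "\<bar>u$j\<bar> \<le> 1" for j using component_le_norm_cart[of u j] u by simp
  have mb: "mnorm (c *\<^sub>R Q) \<le> mnorm Q" if "\<bar>c\<bar> \<le> 1" for c Q
    using that mnorm_nonneg[of Q] by (simp add: mnorm_scaleR mult_left_le_one_le)
  have "mnorm (u$1 *\<^sub>R covPhi A Phi 1 y + u$2 *\<^sub>R covPhi A Phi 2 y + u$3 *\<^sub>R covPhi A Phi 3 y)
      \<le> mnorm (covPhi A Phi 1 y) + mnorm (covPhi A Phi 2 y) + mnorm (covPhi A Phi 3 y)"
    using mnorm_add mb[OF uj] by (smt (verit))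
  also have "\<dots> \<le> 1/8" using b2[of t] by (simp add: sum_3 y_def)
  finally show "mnorm (lineP' Phi x u t + mcomm (lineB A x u t) (lineP Phi x u t)) \<le> 1/8"
    by (simp add: eq)
next
  have cl: "continuous_on UNIV (\<lambda>t::real. x + t *\<^sub>R u)" by (intro continuous_intros)
  have "continuous_on UNIV (\<lambda>t. A (x + t *\<^sub>R u) j)" for j
    using continuous_on_compose[OF cl continuous_on_subset[OF cA[of j]]] by (simp add: o_def)
  then show "continuous_on UNIV (lineB A x u)"
    unfolding lineB_def[abs_def] by (intro continuous_on_sum continuous_on_scaleR continuous_on_const) auto
qed

lemma far_line:
  fixes x u o0 :: pt
  assumes u: "norm u = 1" and R: "norm (closest_pt o0 p u - o0) \<ge> R0 + norm o0"
  shows "norm (closest_pt o0 p u + t *\<^sub>R u) \<ge> R0"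
proof -
  define x where "x = closest_pt o0 p u"
  have uu: "inner u u = 1" using u by (simp add: power2_norm_eq_inner[symmetric])
  have orth: "inner (x - o0) u = 0"
    unfolding x_def closest_pt_def
    by (simp add: inner_diff_left inner_add_left uu inner_commute algebra_simps)
  have "(norm (x + t *\<^sub>R u - o0))\<^sup>2 = (norm (x - o0))\<^sup>2 + t\<^sup>2"
  proof -
    have e: "x + t *\<^sub>R u - o0 = (x - o0) + t *\<^sub>R u" by (simp add: algebra_simps)
    have "(norm (x + t *\<^sub>R u - o0))\<^sup>2 = inner ((x - o0) + t *\<^sub>R u) ((x - o0) + t *\<^sub>R u)"
      unfolding e by (rule power2_norm_eq_inner)
    also have "\<dots> = (norm (x - o0))\<^sup>2 + t\<^sup>2"
      using orth uu dot_square_norm[of "x - o0"] by (simp add: inner_add_left inner_add_right inner_commute power2_norm_eq_inner power2_eq_square)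
    finally show ?thesis .
  qed
  then have "(norm (x - o0))\<^sup>2 \<le> (norm (x + t *\<^sub>R u - o0))\<^sup>2" by simp
  then have "norm (x - o0) \<le> norm (x + t *\<^sub>R u - o0)" by (simp add: power2_le_iff_abs_le)
  moreover have "norm (x + t *\<^sub>R u - o0) \<le> norm (x + t *\<^sub>R u) + norm o0" by (rule norm_triangle_ineq4)
  ultimately show ?thesis using R unfolding x_def[symmetric] by linarith
qed

theorem mainTheorem7:
  fixes k :: nat and A :: "pt \<Rightarrow> 3 \<Rightarrow> mat" and Phi :: "pt \<Rightarrow> mat" and o0 :: pt
  assumes "monopole k A Phi"
  shows "\<exists>R C. R > 0 \<and> C > 0 \<and>
           (\<forall>p u. norm u = 1 \<longrightarrow>
              \<not> spectral_line A Phi (closest_pt o0 p u) u \<longrightarrow>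
              norm (closest_pt o0 p u - o0) \<ge> R \<longrightarrow>
              onorm (Mgamma A Phi (closest_pt o0 p u) u) \<le> C)"
proof -
  have sA: "\<And>y j. su2 (A y j)" and sPhi: "\<And>y. su2 (Phi y)"
    and smA: "\<And>j. smooth (\<lambda>x. A x j)" and smPhi: "smooth Phi"
    using assms by (auto simp: monopole_def)
  obtain C1 R1 where R1: "R1 > 0" and H1: "\<And>x. norm x \<ge> R1 \<Longrightarrow>
      \<bar>mnorm (Phi x) - (1 - real k / (2 * norm x))\<bar> \<le> C1 / (norm x)\<^sup>2"
    using assms unfolding monopole_def by blast
  obtain C2 R2 where R2: "R2 > 0" and H2: "\<And>x. norm x \<ge> R2 \<Longrightarrow>
      (\<Sum>j\<in>UNIV. mnorm (covPhi A Phi j x)) \<le> C2 / (norm x)\<^sup>2"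
    using assms unfolding monopole_def by blast
  have dPhi: "Phi differentiable (at y)" for y
    using smPhi unfolding smooth_def by (metis iter_pd.simps(1))
  have cA: "continuous_on UNIV (\<lambda>y. A y j)" for j
  proof -
    have "(\<lambda>y. A y j) differentiable (at y)" for y
      using smA[of j] unfolding smooth_def by (metis iter_pd.simps(1))
    then show ?thesis
      by (meson continuous_at_imp_continuous_on differentiable_imp_continuous_within)
  qed
  define R0 where "R0 = max R1 (max R2 (max 1 (max (4 * real k) (max (8 * \<bar>C1\<bar>) (8 * \<bar>C2\<bar>)))))"
  have far: "3/4 \<le> mnorm (Phi y) \<and> mnorm (Phi y) \<le> 5/4 \<and> (\<Sum>j\<in>UNIV. mnorm (covPhi A Phi j y)) \<le> 1/8"
    if y: "norm y \<ge> R0" for y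
  proof -
    define r where "r = norm y"
    have r1: "r \<ge> 1" and rR1: "r \<ge> R1" and rR2: "r \<ge> R2" and rk: "r \<ge> 4 * real k"
      and rC1: "r \<ge> 8 * \<bar>C1\<bar>" and rC2: "r \<ge> 8 * \<bar>C2\<bar>"
    proof -
      have "R1 \<le> R0" unfolding R0_def by (rule max.cobounded1)
      moreover have "R2 \<le> R0" unfolding R0_def by (rule max.coboundedI2, rule max.cobounded1)
      moreover have "1 \<le> R0" unfolding R0_def by (rule max.coboundedI2, rule max.coboundedI2, rule max.cobounded1)
      moreover have "4 * real k \<le> R0" unfolding R0_def
        by (rule max.coboundedI2, rule max.coboundedI2, rule max.coboundedI2, rule max.cobounded1)
      moreover have "8 * \<bar>C1\<bar> \<le> R0" unfolding R0_def
        by (rule max.coboundedI2, rule max.coboundedI2, rule max.coboundedI2, rule max.coboundedI2, rule max.cobounded1)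
      moreover have "8 * \<bar>C2\<bar> \<le> R0" unfolding R0_def
        by (rule max.coboundedI2, rule max.coboundedI2, rule max.coboundedI2, rule max.coboundedI2, rule max.cobounded2)
      ultimately have "R1 \<le> R0" "R2 \<le> R0" "1 \<le> R0" "4 * real k \<le> R0" "8 * \<bar>C1\<bar> \<le> R0" "8 * \<bar>C2\<bar> \<le> R0"
        by auto
      then show "r \<ge> 1" "r \<ge> R1" "r \<ge> R2" "r \<ge> 4 * real k" "r \<ge> 8 * \<bar>C1\<bar>" "r \<ge> 8 * \<bar>C2\<bar>"
        using y unfolding r_def by linarith+
    qed
    have sq: "r \<le> r\<^sup>2" using r1 by (simp add: power2_eq_square)
    have c1: "C1 / r\<^sup>2 \<le> 1/8"
    proof -
      have "C1 / r\<^sup>2 \<le> \<bar>C1\<bar> / r\<^sup>2" using r1 by (intro divide_right_mono) auto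
      also have "\<dots> \<le> \<bar>C1\<bar> / r" using r1 sq by (intro divide_left_mono) auto
      also have "\<dots> \<le> 1/8" using rC1 r1 by (simp add: divide_simps)
      finally show ?thesis .
    qed
    have c2: "C2 / r\<^sup>2 \<le> 1/8"
    proof -
      have "C2 / r\<^sup>2 \<le> \<bar>C2\<bar> / r\<^sup>2" using r1 by (intro divide_right_mono) auto
      also have "\<dots> \<le> \<bar>C2\<bar> / r" using r1 sq by (intro divide_left_mono) auto
      also have "\<dots> \<le> 1/8" using rC2 r1 by (simp add: divide_simps)
      finally show ?thesis .
    qed
    have kk: "real k / (2 * r) \<le> 1/8" and kk0: "0 \<le> real k / (2 * r)"
      using rk r1 by (auto simp: divide_simps)
    define m where "m = mnorm (Phi y)"
    define K where "K = real k / (2 * r)"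
    define S where "S = (\<Sum>j\<in>UNIV. mnorm (covPhi A Phi j y))"
    have ab: "\<bar>m - (1 - K)\<bar> \<le> C1 / r\<^sup>2"
      using H1[OF rR1[unfolded r_def]] by (simp add: r_def m_def K_def)
    have "S \<le> C2 / r\<^sup>2"
      using H2[OF rR2[unfolded r_def]] by (simp add: r_def S_def)
    moreover have "m - (1 - K) \<le> C1 / r\<^sup>2" by (rule abs_le_D1[OF ab])
    moreover have "- (m - (1 - K)) \<le> C1 / r\<^sup>2" by (rule abs_le_D2[OF ab])
    moreover have "K \<le> 1/8" "0 \<le> K" using kk kk0 by (simp_all add: K_def)
    ultimately have "3/4 \<le> m \<and> m \<le> 5/4 \<and> S \<le> 1/8" using c1 c2 by linarith
    then show ?thesis by (simp add: m_def S_def)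
  qed
  have R0pos: "R0 \<ge> 1" unfolding R0_def by (rule max.coboundedI2, rule max.coboundedI2, rule max.cobounded1)
  show ?thesis
  proof (rule exI[of _ "R0 + norm o0"], rule exI[of _ "5::real"], intro conjI allI impI)
    show "R0 + norm o0 > 0" using R0pos by (smt (verit) norm_ge_zero)
    show "(5::real) > 0" by simp
    fix p u
    assume u: "norm u = 1" and ns: "\<not> spectral_line A Phi (closest_pt o0 p u) u" and R: "norm (closest_pt o0 p u - o0) \<ge> R0 + norm o0"
    define x where "x = closest_pt o0 p u"
    have fl: "norm (x + t *\<^sub>R u) \<ge> R0" for t unfolding x_def by (rule far_line[OF u R])
    have gd: "gooddata (lineP Phi x u) (lineB A x u) (lineP' Phi x u)"
      by (rule line_good[OF sA sPhi dPhi cA u]) (use far[OF fl] in auto)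
    have "Mgamma A Phi x u = (\<lambda>v. THE w. \<exists>a\<in>Lp (lineP Phi x u) (lineB A x u). \<exists>b\<in>Lm (lineP Phi x u) (lineB A x u). v = a + b \<and> w = a - b)"
      by (simp add: Mgamma_def[abs_def] Lplus_eq Lminus_eq)
    then show "onorm (Mgamma A Phi (closest_pt o0 p u) u) \<le> 5"
      using line_onorm[OF gd] unfolding x_def by simp
  qed
qed

end
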